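(* For every $(t,h)$, the function $z\mapsto J(t,z,h)$ is strictly convex on $\mathbb{R}_+$.
   Context: Fix constants $T>0$, $r>0$, $\mu\in\mathbb{R}$, $\sigma>0$, $\rho>0$, $m^0\ge 0$, $m^1\ge 0$, $\kappa>0$, $\delta>0$, $\alpha\in(0,1)$, $I>0$ and a number $f(I)>0$. Write $\mathbb{R}_+=(0,\infty)$, $\mathcal{O}=[0,T]\times\mathbb{R}_+^2$, $\theta=(\mu-r)/\sigma$, $g_t=\frac{I}{r}(1-e^{-r(T-t)})$. Let $(\Omega,\mathcal{F},\mathbb{F},\mathbb{P})$ be a complete filtered probability space satisfying the usual conditions, carrying a standard $\mathbb{F}$-Brownian motion $B$. Let $\widehat u(z,h)=(1-\alpha)(z/\alpha)^{\alpha/(\alpha-1)}h$. For $(t,z,h)\in\mathcal{O}$ and $s\in[t,T]$ let $H^2_s=he^{-\delta(s-t)}+\frac{f(I)}{\delta}(1-e^{-\delta(s-t)})$, $M^{H^2}_s=m^0+m^1(H^2_s)^{-\kappa}$, and let $Z^2$ solve $dZ^2_s=(\rho-r+M^{H^2}_s)Z^2_s\,ds-\theta Z^2_s\,dB_s$, $Z^2_t=z$. Define $W(t,z,h)=\mathbb{E}\big[\int_t^T e^{-\int_t^s(\rho+M^{H^2}_u)du}\,\widehat u(Z^2_s,H^2_s)\,ds\big]$. For $s\in[t,T]$ let $H^1_s=he^{-\delta(s-t)}$, $M^{H^1}_s=m^0+m^1(H^1_s)^{-\kappa}$, and let $Z^1$ solve $dZ^1_s=(\rho-r+M^{H^1}_s)Z^1_s\,ds-\theta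 Z^1_s\,dB_s$, $Z^1_t=z$. Define $J(t,z,h)=\sup_{\tau}\mathbb{E}\Big[\int_t^\tau e^{-\int_t^s(\rho+M^{H^1}_u)du}\widehat u(Z^1_s,H^1_s)ds+e^{-\int_t^\tau(\rho+M^{H^1}_u)du}\big(W(\tau,Z^1_\tau,H^1_\tau)-Z^1_\tau g_\tau\big)\Big]$, the supremum over $\mathbb{F}$-stopping times $\tau$ with values in $[t,T]$. *)

theory Defs
  imports "HOL-Probability.Probability"
begin

definition strictly_convex_on :: "real set \<Rightarrow> (real \<Rightarrow> real) \<Rightarrow> bool" where
  "strictly_convex_on S f \<longleftrightarrow> convex S \<and>
     (\<forall>x\<in>S. \<forall>y\<in>S. \<forall>u. x \<noteq> y \<longrightarrow> 0 < u \<longrightarrow> u < 1 \<longrightarrow>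
        f (u * x + (1 - u) * y) < u * f x + (1 - u) * f y)"

text \<open>F is a filtration on M indexed by real times (only t \<ge> 0 matters);
  usual conditions = M complete, F 0 contains all M-null sets (hence all negligible sets),
  and F right-continuous.\<close>
definition usual_filtration :: "'a measure \<Rightarrow> (real \<Rightarrow> 'a measure) \<Rightarrow> bool" where
  "usual_filtration M F \<longleftrightarrow>
     prob_space M \<and> complete_measure M \<and>
     (\<forall>s. space (F s) = space M \<and> sets (F s) \<subseteq> sets M) \<and>
     (\<forall>s u. s \<le> u \<longrightarrow> sets (F s) \<subseteq> sets (F u)) \<and>
     null_sets M \<subseteq> sets (F 0) \<and>
     (\<forall>s\<ge>0. sets (F s) = (\<Inter>u\<in>{s<..}. sets (F u)))"

definition F_brownian_motion :: "'a measure \<Rightarrow> (real \<Rightarrow> 'a measure) \<Rightarrow> (real \<Rightarrow> 'a \<Rightarrow> real) \<Rightarrow> bool" where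
  "F_brownian_motion M F B \<longleftrightarrow>
     (\<forall>s\<ge>0. B s \<in> borel_measurable (F s)) \<and>
     (\<forall>\<omega>\<in>space M. B 0 \<omega> = 0) \<and>
     (\<forall>\<omega>\<in>space M. continuous_on {0..} (\<lambda>s. B s \<omega>)) \<and>
     (\<forall>s u. 0 \<le> s \<longrightarrow> s < u \<longrightarrow>
        distributed M lborel (\<lambda>\<omega>. B u \<omega> - B s \<omega>) (normal_density 0 (sqrt (u - s))) \<and>
        prob_space.indep_set M (sets (F s))
          (sets (vimage_algebra (space M) (\<lambda>\<omega>. B u \<omega> - B s \<omega>) borel)))"

definition uhat :: "real \<Rightarrow> real \<Rightarrow> real \<Rightarrow> real" where
  "uhat \<alpha> z h = (1 - \<alpha>) * (z / \<alpha>) powr (\<alpha> / (\<alpha> - 1)) * h"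

definition gfun :: "real \<Rightarrow> real \<Rightarrow> real \<Rightarrow> real \<Rightarrow> real" where
  "gfun T r I t = I / r * (1 - exp (- r * (T - t)))"

definition mort :: "real \<Rightarrow> real \<Rightarrow> real \<Rightarrow> real \<Rightarrow> real" where
  "mort m0 m1 \<kappa> x = m0 + m1 * x powr (- \<kappa>)"

definition H1 :: "real \<Rightarrow> real \<Rightarrow> real \<Rightarrow> real \<Rightarrow> real" where
  "H1 \<delta> t h s = h * exp (- \<delta> * (s - t))"

definition H2 :: "real \<Rightarrow> real \<Rightarrow> real \<Rightarrow> real \<Rightarrow> real \<Rightarrow> real" where
  "H2 \<delta> fI t h s = h * exp (- \<delta> * (s - t)) + fI / \<delta> * (1 - exp (- \<delta> * (s - t)))"

text \<open>Unique (strong) solution of dZ = (rho - r + Mf s) Z ds - theta Z dB, Z_t = z,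
  for a deterministic continuous coefficient Mf, written in closed form.\<close>
definition Zproc :: "real \<Rightarrow> real \<Rightarrow> real \<Rightarrow> (real \<Rightarrow> real) \<Rightarrow> (real \<Rightarrow> 'a \<Rightarrow> real)
    \<Rightarrow> real \<Rightarrow> real \<Rightarrow> real \<Rightarrow> 'a \<Rightarrow> real" where
  "Zproc \<rho> r \<theta> Mf B t z s \<omega> =
     z * exp (integral {t..s} (\<lambda>u. \<rho> - r + Mf u) - \<theta>\<^sup>2 / 2 * (s - t) - \<theta> * (B s \<omega> - B t \<omega>))"

definition disc :: "real \<Rightarrow> (real \<Rightarrow> real) \<Rightarrow> real \<Rightarrow> real \<Rightarrow> real" where
  "disc \<rho> Mf t s = exp (- integral {t..s} (\<lambda>u. \<rho> + Mf u))"

definition Wfun :: "'a measure \<Rightarrow> (real \<Rightarrow> 'a \<Rightarrow> real) \<Rightarrow> real \<Rightarrow> real \<Rightarrow> real \<Rightarrow> real \<Rightarrow> real \<Rightarrow> real \<Rightarrow> real \<Rightarrow> real \<Rightarrow> real \<Rightarrow> real \<Rightarrow> real \<Rightarrow> real \<Rightarrow> real \<Rightarrow> real \<Rightarrow> real" where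
  "Wfun M B T r \<mu> \<sigma> \<rho> m0 m1 \<kappa> \<delta> \<alpha> fI t z h =
     (let \<theta> = (\<mu> - r) / \<sigma>;
          H = H2 \<delta> fI t h;
          Mf = (\<lambda>u. mort m0 m1 \<kappa> (H u));
          Z = Zproc \<rho> r \<theta> Mf B t z
      in integral\<^sup>L M (\<lambda>\<omega>. integral {t..T} (\<lambda>s. disc \<rho> Mf t s * uhat \<alpha> (Z s \<omega>) (H s))))"

definition stopping_times_in :: "'a measure \<Rightarrow> (real \<Rightarrow> 'a measure) \<Rightarrow> real \<Rightarrow> real \<Rightarrow> ('a \<Rightarrow> real) set" where
  "stopping_times_in M F t T =
     {\<tau>. stopping_time F \<tau> \<and> (\<forall>\<omega>\<in>space M. t \<le> \<tau> \<omega> \<and> \<tau> \<omega> \<le> T)}"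

definition Jfun :: "'a measure \<Rightarrow> (real \<Rightarrow> 'a measure) \<Rightarrow> (real \<Rightarrow> 'a \<Rightarrow> real) \<Rightarrow> real \<Rightarrow> real \<Rightarrow> real \<Rightarrow> real \<Rightarrow> real \<Rightarrow> real \<Rightarrow> real \<Rightarrow> real \<Rightarrow> real \<Rightarrow> real \<Rightarrow> real \<Rightarrow> real \<Rightarrow> real \<Rightarrow> real \<Rightarrow> real \<Rightarrow> real" where
  "Jfun M F B T r \<mu> \<sigma> \<rho> m0 m1 \<kappa> \<delta> \<alpha> I fI t z h =
     (let \<theta> = (\<mu> - r) / \<sigma>;
          H = H1 \<delta> t h;
          Mf = (\<lambda>u. mort m0 m1 \<kappa> (H u));
          Z = Zproc \<rho> r \<theta> Mf B t z
      in SUP \<tau>\<in>stopping_times_in M F t T.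
           integral\<^sup>L M (\<lambda>\<omega>.
             integral {t..\<tau> \<omega>} (\<lambda>s. disc \<rho> Mf t s * uhat \<alpha> (Z s \<omega>) (H s))
             + disc \<rho> Mf t (\<tau> \<omega>) *
                 (Wfun M B T r \<mu> \<sigma> \<rho> m0 m1 \<kappa> \<delta> \<alpha> fI (\<tau> \<omega>) (Z (\<tau> \<omega>) \<omega>) (H (\<tau> \<omega>))
                  - Z (\<tau> \<omega>) \<omega> * gfun T r I (\<tau> \<omega>))))"

end

theory Submission
  imports Defs
begin

lemma powr_tangent:
  fixes p m w :: real assumes p: "p < 0" and m: "0 < m" and w: "0 < w" "w \<noteq> m"
  shows "m powr p + p * m powr (p - 1) * (w - m) < w powr p"
proof (cases "m < w")
  case True
  have "\<exists>z>m. z < w \<and> w powr p - m powr p = (w - m) * (p * z powr (p - 1))"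
    by (rule MVT2[OF True]) (use m in \<open>auto intro!: has_real_derivative_powr\<close>)
  then obtain z where z: "m < z" "z < w" "w powr p - m powr p = (w - m) * (p * z powr (p - 1))" by blast
  have "z powr (p - 1) < m powr (p - 1)" by (rule powr_less_mono2_neg) (use p m z in auto)
  then have "p * m powr (p - 1) < p * z powr (p - 1)" using p by simp
  then have "(w - m) * (p * m powr (p - 1)) < (w - m) * (p * z powr (p - 1))" using True by simp
  then show ?thesis using z(3) by (simp add: algebra_simps)
next
  case False
  then have wm: "w < m" using w by simp
  have "\<exists>z>w. z < m \<and> m powr p - w powr p = (m - w) * (p * z powr (p - 1))"
    by (rule MVT2[OF wm]) (use w in \<open>auto intro!: has_real_derivative_powr\<close>)
  then obtain z where z: "w < z" "z < m" "m powr p - w powr p = (m - w) * (p * z powr (p - 1))" by blast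
  have "m powr (p - 1) < z powr (p - 1)" by (rule powr_less_mono2_neg) (use p w z in auto)
  then have "p * z powr (p - 1) < p * m powr (p - 1)" using p by simp
  then have "(m - w) * (p * z powr (p - 1)) < (m - w) * (p * m powr (p - 1))" using wm by simp
  then show ?thesis using z(3) by (simp add: algebra_simps)
qed

lemma powr_strict_conv:
  fixes p x y u :: real
  assumes p: "p < 0" and xy: "0 < x" "0 < y" "x \<noteq> y" and u: "0 < u" "u < 1"
  shows "(u * x + (1 - u) * y) powr p < u * x powr p + (1 - u) * y powr p"
proof -
  define m where "m = u * x + (1 - u) * y"
  have m0: "0 < m" unfolding m_def using xy u by (simp add: add_pos_pos)
  have xm: "x \<noteq> m"
  proof
    assume xm: "x = m"
    have "(1 - u) * (x - y) = x - m" unfolding m_def by (simp add: algebra_simps)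
    then have "(1 - u) * (x - y) = 0" using xm by simp
    then have "x - y = 0" using u by simp
    then show False using xy by simp
  qed
  have ym: "y \<noteq> m"
  proof
    assume ym: "y = m"
    have "u * (x - y) = m - y" unfolding m_def by (simp add: algebra_simps)
    then have "u * (x - y) = 0" using ym by simp
    then have "x - y = 0" using u by simp
    then show False using xy by simp
  qed
  have 1: "m powr p + p * m powr (p - 1) * (x - m) < x powr p" by (rule powr_tangent[OF p m0 xy(1) xm])
  have 2: "m powr p + p * m powr (p - 1) * (y - m) < y powr p" by (rule powr_tangent[OF p m0 xy(2) ym])
  have "u * (m powr p + p * m powr (p - 1) * (x - m)) + (1 - u) * (m powr p + p * m powr (p - 1) * (y - m))
      < u * x powr p + (1 - u) * y powr p"
    using mult_strict_left_mono[OF 1, of u] mult_strict_left_mono[OF 2, of "1 - u"] u by linarith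
  moreover have "u * (m powr p + p * m powr (p - 1) * (x - m)) + (1 - u) * (m powr p + p * m powr (p - 1) * (y - m)) = m powr p"
    unfolding m_def by (simp add: algebra_simps)
  ultimately show ?thesis unfolding m_def by simp
qed

lemma sup_strict:
  fixes f :: "'i \<Rightarrow> real \<Rightarrow> real" and S :: "'i set" and p C :: real
  assumes p: "p < 0" and S: "S \<noteq> {}"
    and form: "\<And>i. i \<in> S \<Longrightarrow> \<exists>A Bc. 0 \<le> A \<and> A \<le> C \<and> 0 \<le> Bc \<and> (\<forall>z>0. f i z = z powr p * A - z * Bc)"
    and pos: "\<And>z. z > 0 \<Longrightarrow> \<exists>i\<in>S. f i z > 0"
  shows "strictly_convex_on {0<..} (\<lambda>z. SUP i\<in>S. f i z)"
proof -
  define G where "G z = (SUP i\<in>S. f i z)" for z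
  have bdd: "bdd_above ((\<lambda>i. f i z) ` S)" if "z > 0" for z
  proof (rule bdd_aboveI2)
    fix i assume "i \<in> S"
    then obtain A Bc where AB: "0 \<le> A" "A \<le> C" "0 \<le> Bc" "\<forall>z>0. f i z = z powr p * A - z * Bc" using form by blast
    have "f i z = z powr p * A - z * Bc" using AB(4) that by simp
    also have "\<dots> \<le> z powr p * C"
    proof -
      have "z powr p * A \<le> z powr p * C" using AB(2) by (intro mult_left_mono) auto
      moreover have "0 \<le> z * Bc" using AB(3) that by simp
      ultimately show ?thesis by linarith
    qed
    finally show "f i z \<le> z powr p * C" .
  qed
  have upper: "f i z \<le> G z" if "z > 0" "i \<in> S" for z i unfolding G_def by (rule cSUP_upper[OF that(2) bdd[OF that(1)]])
  have Gpos: "0 < G z" if z0: "z > 0" for z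
  proof -
    obtain i where "i \<in> S" "f i z > 0" using pos[OF z0] by blast
    then show ?thesis using upper[OF z0] by fastforce
  qed
  show ?thesis unfolding strictly_convex_on_def G_def[symmetric]
  proof (intro conjI ballI allI impI)
    show "convex {0::real<..}" by (simp add: convex_real_interval)
    fix x y u :: real assume x: "x \<in> {0<..}" and y: "y \<in> {0<..}" and xy: "x \<noteq> y" and u: "0 < u" "u < 1"
    define m where "m = u * x + (1 - u) * y"
    have x0: "0 < x" and y0: "0 < y" using x y by auto
    have m0: "0 < m" unfolding m_def using x0 y0 u by (simp add: add_pos_pos)
    define q where "q = m powr p"
    define \<gamma> where "\<gamma> = u * x powr p + (1 - u) * y powr p - m powr p"
    have q0: "0 < q" unfolding q_def using m0 by simp
    have g0: "0 < \<gamma>" unfolding \<gamma>_def m_def using powr_strict_conv[OF p x0 y0 xy u] by simp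
    define R where "R = u * G x + (1 - u) * G y"
    have R0: "0 < R" unfolding R_def using Gpos[OF x0] Gpos[OF y0] u by (simp add: add_pos_pos)
    define A0 where "A0 = R / (q + \<gamma>)"
    have A0e: "R - A0 * \<gamma> = q * A0" unfolding A0_def using q0 g0 by (simp add: field_simps)
    have "G m \<le> q * A0" unfolding G_def
    proof (rule cSUP_least[OF S])
      fix i assume i: "i \<in> S"
      then obtain A Bc where AB: "0 \<le> A" "A \<le> C" "0 \<le> Bc" "\<forall>z>0. f i z = z powr p * A - z * Bc" using form by blast
      have fm: "f i m = q * A - m * Bc" using AB(4) m0 unfolding q_def by simp
      have fx: "f i x = x powr p * A - x * Bc" using AB(4) x0 by simp
      have fy: "f i y = y powr p * A - y * Bc" using AB(4) y0 by simp
      have mB: "m * Bc = u * (x * Bc) + (1 - u) * (y * Bc)" unfolding m_def by (simp add: algebra_simps)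
      have e1: "f i m = u * f i x + (1 - u) * f i y - A * \<gamma>"
        unfolding fm fx fy \<gamma>_def q_def using mB by (simp add: algebra_simps)
      have "u * f i x + (1 - u) * f i y \<le> R"
        unfolding R_def using upper[OF x0 i] upper[OF y0 i] u
        by (intro add_mono mult_left_mono) auto
      then have b1: "f i m \<le> R - A * \<gamma>" using e1 by linarith
      have b2: "f i m \<le> q * A" using fm m0 AB(3) by simp
      show "f i m \<le> q * A0"
      proof (cases "A \<le> A0")
        case True then show ?thesis using b2 q0 by (smt (verit) mult_left_mono)
      next
        case False then have "A0 * \<gamma> \<le> A * \<gamma>" using g0 by simp
        then show ?thesis using b1 A0e by linarith
      qed
    qed
    also have "q * A0 < R" unfolding A0_def using q0 g0 R0 by (simp add: field_simps)
    finally show "G (u * x + (1 - u) * y) < u * G x + (1 - u) * G y" unfolding m_def R_def .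
  qed
qed


lemma (in prob_space) lin_form:
  fixes X Yp Xb :: "'a \<Rightarrow> real" and p :: real
  assumes X0: "\<And>\<omega>. \<omega> \<in> space M \<Longrightarrow> 0 \<le> X \<omega>" and XB: "\<And>\<omega>. \<omega> \<in> space M \<Longrightarrow> X \<omega> \<le> Xb \<omega>"
    and Xbi: "integrable M Xb" and Ym: "Yp \<in> borel_measurable M" and Y0: "\<And>\<omega>. \<omega> \<in> space M \<Longrightarrow> 0 \<le> Yp \<omega>"
  shows "\<exists>A Bc. 0 \<le> A \<and> A \<le> integral\<^sup>L M Xb \<and> 0 \<le> Bc \<and>
           (\<forall>z>0. integral\<^sup>L M (\<lambda>\<omega>. z powr p * X \<omega> - z * Yp \<omega>) = z powr p * A - z * Bc)"
proof (cases "integrable M X \<and> integrable M Yp")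
  case True
  show ?thesis
  proof (intro exI conjI allI impI)
    show "0 \<le> integral\<^sup>L M X" by (rule integral_nonneg_AE) (use X0 in auto)
    show "integral\<^sup>L M X \<le> integral\<^sup>L M Xb" by (rule integral_mono) (use True Xbi XB in auto)
    show "0 \<le> integral\<^sup>L M Yp" by (rule integral_nonneg_AE) (use Y0 in auto)
    fix z :: real assume "0 < z"
    show "integral\<^sup>L M (\<lambda>\<omega>. z powr p * X \<omega> - z * Yp \<omega>) = z powr p * integral\<^sup>L M X - z * integral\<^sup>L M Yp"
      using True by (simp add: integral_diff)
  qed
next
  case False
  have nz: "\<not> integrable M (\<lambda>\<omega>. z powr p * X \<omega> - z * Yp \<omega>)" if z0: "0 < z" for z
  proof
    assume hi: "integrable M (\<lambda>\<omega>. z powr p * X \<omega> - z * Yp \<omega>)"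
    define h where "h = (\<lambda>\<omega>. z powr p * X \<omega> - z * Yp \<omega>)"
    have hm: "h \<in> borel_measurable M" using hi unfolding h_def by (rule borel_measurable_integrable)
    have "(\<lambda>\<omega>. (h \<omega> + z * Yp \<omega>) / z powr p) \<in> borel_measurable M" using hm Ym by measurable
    then have Xm: "X \<in> borel_measurable M"
      by (rule measurable_cong[THEN iffD1, rotated]) (use z0 in \<open>auto simp: h_def\<close>)
    have Xi: "integrable M X"
      by (rule Bochner_Integration.integrable_bound[OF Xbi Xm])
         (rule AE_I2, use X0 XB in \<open>force\<close>)
    have hi': "integrable M h" using hi unfolding h_def .
    have "integrable M (\<lambda>\<omega>. z powr p * X \<omega>)" using Xi by (rule integrable_mult_right)
    from Bochner_Integration.integrable_diff[OF this hi']
    have "integrable M (\<lambda>\<omega>. z powr p * X \<omega> - h \<omega>)" .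
    then have "integrable M (\<lambda>\<omega>. (z powr p * X \<omega> - h \<omega>) / z)" by (rule integrable_divide)
    moreover have "integrable M (\<lambda>\<omega>. (z powr p * X \<omega> - h \<omega>) / z) = integrable M Yp"
      by (rule Bochner_Integration.integrable_cong) (use z0 in \<open>auto simp: h_def\<close>)
    ultimately have "integrable M Yp" by simp
    then show False using False Xi by simp
  qed
  show ?thesis
  proof (intro exI conjI allI impI)
    show "(0::real) \<le> 0" by simp
    show "0 \<le> integral\<^sup>L M Xb"
    proof (rule integral_nonneg_AE, rule AE_I2)
      fix x assume "x \<in> space M"
      then show "0 \<le> Xb x" using X0[of x] XB[of x] by linarith
    qed
    fix z :: real assume "0 < z"
    then show "integral\<^sup>L M (\<lambda>\<omega>. z powr p * X \<omega> - z * Yp \<omega>) = z powr p * 0 - z * 0"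
      using not_integrable_integral_eq[OF nz[OF \<open>0 < z\<close>]] by simp
  qed (simp)
qed


lemma Zproc_scale: "Zproc \<rho> r \<theta> Mf B a (z * y) s \<omega> = z * Zproc \<rho> r \<theta> Mf B a y s \<omega>"
  unfolding Zproc_def by simp

lemma Zproc_pos: "0 < y \<Longrightarrow> 0 < Zproc \<rho> r \<theta> Mf B a y s \<omega>"
  unfolding Zproc_def by simp

lemma Zproc_exp: "Zproc \<rho> r \<theta> Mf B a 1 s \<omega> = exp (integral {a..s} (\<lambda>u. \<rho> - r + Mf u) - \<theta>\<^sup>2 / 2 * (s - a) - \<theta> * (B s \<omega> - B a \<omega>))"
  unfolding Zproc_def by simp

lemma uhat_scale: assumes "0 < z" "0 < y" "0 < \<alpha>"
  shows "uhat \<alpha> (z * y) hv = z powr (\<alpha> / (\<alpha> - 1)) * uhat \<alpha> y hv"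
proof -
  have "(z * y / \<alpha>) powr (\<alpha> / (\<alpha> - 1)) = z powr (\<alpha> / (\<alpha> - 1)) * (y / \<alpha>) powr (\<alpha> / (\<alpha> - 1))"
    using assms by (simp add: powr_mult[symmetric] mult.assoc times_divide_eq_right)
  then show ?thesis unfolding uhat_def by simp
qed

lemma uhat_exp: assumes "0 < \<alpha>"
  shows "uhat \<alpha> (exp e) hv = (1 - \<alpha>) * (1 / \<alpha>) powr (\<alpha> / (\<alpha> - 1)) * exp (\<alpha> / (\<alpha> - 1) * e) * hv"
proof -
  have "(exp e / \<alpha>) powr (\<alpha> / (\<alpha> - 1)) = exp e powr (\<alpha> / (\<alpha> - 1)) * (1 / \<alpha>) powr (\<alpha> / (\<alpha> - 1))"
    using assms by (simp add: powr_mult[symmetric])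
  also have "exp e powr (\<alpha> / (\<alpha> - 1)) = exp (\<alpha> / (\<alpha> - 1) * e)" by (simp add: powr_def)
  finally show ?thesis unfolding uhat_def by (simp add: mult_ac)
qed

lemma int_nonneg_gen: fixes g :: "real \<Rightarrow> real" assumes "\<And>u. u \<in> S \<Longrightarrow> 0 \<le> g u" shows "0 \<le> integral S g"
  by (cases "g integrable_on S") (use assms in \<open>auto intro: integral_nonneg simp: not_integrable_integral\<close>)

lemma int_lower_gen:
  fixes g :: "real \<Rightarrow> real"
  assumes "a \<le> s" "s - a \<le> L" "\<And>v. 0 \<le> g v"
  shows "- \<bar>c\<bar> * L \<le> integral {a..s} (\<lambda>v. c + g v)"
proof (cases "(\<lambda>v. c + g v) integrable_on {a..s}")
  case True
  have ci: "(\<lambda>v. c) integrable_on {a..s}" by (intro integrable_continuous_real continuous_intros)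
  have gi: "g integrable_on {a..s}" using integrable_diff[OF True ci] by simp
  have "integral {a..s} (\<lambda>v. c + g v) = integral {a..s} (\<lambda>v. c) + integral {a..s} g"
    by (rule integral_add[OF ci gi])
  also have "integral {a..s} (\<lambda>v. c) = c * (s - a)" using assms(1) by simp
  finally have e: "integral {a..s} (\<lambda>v. c + g v) = c * (s - a) + integral {a..s} g" .
  have "0 \<le> integral {a..s} g" by (rule int_nonneg_gen) (use assms in auto)
  moreover have "- \<bar>c\<bar> * L \<le> c * (s - a)"
  proof -
    have "- \<bar>c\<bar> * L \<le> - \<bar>c\<bar> * (s - a)" using assms by (simp add: mult_left_mono)
    also have "\<dots> \<le> c * (s - a)"
    proof -
      have "- \<bar>c\<bar> \<le> c" by simp
      then have "- \<bar>c\<bar> * (s - a) \<le> c * (s - a)" using assms(1) by (intro mult_right_mono) auto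
      then show ?thesis by simp
    qed
    finally show ?thesis .
  qed
  ultimately show ?thesis using e by linarith
next
  case False
  then show ?thesis using assms by (simp add: not_integrable_integral)
qed

lemma disc_bounds:
  assumes "a \<le> s" "0 \<le> \<rho>" "\<And>v. 0 \<le> Mf v"
  shows "0 < disc \<rho> Mf a s" "disc \<rho> Mf a s \<le> 1"
proof -
  show "0 < disc \<rho> Mf a s" unfolding disc_def by simp
  have "0 \<le> integral {a..s} (\<lambda>u. \<rho> + Mf u)" by (rule int_nonneg_gen) (use assms in \<open>auto intro: add_nonneg_nonneg\<close>)
  then show "disc \<rho> Mf a s \<le> 1" unfolding disc_def by simp
qed

lemma mort_nonneg: "0 \<le> m0 \<Longrightarrow> 0 \<le> m1 \<Longrightarrow> 0 \<le> mort m0 m1 \<kappa> x"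
  unfolding mort_def by simp

lemma integrand_bound:
  fixes \<rho> r \<theta> \<alpha> L Hv Hmax :: real
  assumes au: "a \<le> u" "u - a \<le> L" and Mf: "\<And>v. 0 \<le> Mf v" and H: "0 \<le> Hv" "Hv \<le> Hmax"
    and \<alpha>: "0 < \<alpha>" "\<alpha> < 1" and \<rho>: "0 \<le> \<rho>"
  shows "0 \<le> disc \<rho> Mf a u * uhat \<alpha> (Zproc \<rho> r \<theta> Mf B a 1 u \<omega>) Hv"
    and "disc \<rho> Mf a u * uhat \<alpha> (Zproc \<rho> r \<theta> Mf B a 1 u \<omega>) Hv
         \<le> (1 - \<alpha>) * (1 / \<alpha>) powr (\<alpha> / (\<alpha> - 1)) * exp (- (\<alpha> / (\<alpha> - 1)) * (\<bar>\<rho> - r\<bar> + \<theta>\<^sup>2 / 2) * L) * Hmax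
           * exp (- (\<alpha> / (\<alpha> - 1)) * \<theta> * (B u \<omega> - B a \<omega>))"
proof -
  define p where "p = \<alpha> / (\<alpha> - 1)"
  have p0: "p < 0" unfolding p_def using \<alpha> by (simp add: divide_pos_neg)
  define Iz where "Iz = integral {a..u} (\<lambda>v. \<rho> - r + Mf v)"
  have Iz: "- \<bar>\<rho> - r\<bar> * L \<le> Iz" unfolding Iz_def by (rule int_lower_gen[OF au Mf])
  define cu where "cu = (1 - \<alpha>) * (1 / \<alpha>) powr p"
  have cu0: "0 \<le> cu" unfolding cu_def using \<alpha> by simp
  have eq: "disc \<rho> Mf a u * uhat \<alpha> (Zproc \<rho> r \<theta> Mf B a 1 u \<omega>) Hv
      = disc \<rho> Mf a u * (cu * exp (p * (Iz - \<theta>\<^sup>2 / 2 * (u - a))) * Hv) * exp (- p * \<theta> * (B u \<omega> - B a \<omega>))"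
  proof -
    have "uhat \<alpha> (Zproc \<rho> r \<theta> Mf B a 1 u \<omega>) Hv = cu * exp (p * (Iz - \<theta>\<^sup>2 / 2 * (u - a) - \<theta> * (B u \<omega> - B a \<omega>))) * Hv"
      unfolding Zproc_exp uhat_exp[OF \<alpha>(1)] cu_def p_def Iz_def by simp
    also have "exp (p * (Iz - \<theta>\<^sup>2 / 2 * (u - a) - \<theta> * (B u \<omega> - B a \<omega>)))
        = exp (p * (Iz - \<theta>\<^sup>2 / 2 * (u - a))) * exp (- p * \<theta> * (B u \<omega> - B a \<omega>))"
      by (simp add: exp_add[symmetric] algebra_simps)
    finally show ?thesis by (simp add: mult_ac)
  qed
  have d: "0 < disc \<rho> Mf a u" "disc \<rho> Mf a u \<le> 1" using disc_bounds[OF au(1) \<rho> Mf] by auto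
  show "0 \<le> disc \<rho> Mf a u * uhat \<alpha> (Zproc \<rho> r \<theta> Mf B a 1 u \<omega>) Hv"
    unfolding eq using d cu0 H by simp
  have L0: "0 \<le> L" using au by simp
  have "p * (Iz - \<theta>\<^sup>2 / 2 * (u - a)) \<le> - p * (\<bar>\<rho> - r\<bar> + \<theta>\<^sup>2 / 2) * L"
  proof -
    have "p * Iz \<le> p * (- \<bar>\<rho> - r\<bar> * L)" using mult_left_mono_neg[OF Iz, of p] p0 by simp
    moreover have "- p * (\<theta>\<^sup>2 / 2 * (u - a)) \<le> - p * (\<theta>\<^sup>2 / 2 * L)"
      using p0 au by (intro mult_left_mono) (auto intro: mult_left_mono)
    ultimately show ?thesis by (simp add: algebra_simps)
  qed
  then have e1: "exp (p * (Iz - \<theta>\<^sup>2 / 2 * (u - a))) \<le> exp (- p * (\<bar>\<rho> - r\<bar> + \<theta>\<^sup>2 / 2) * L)" by simp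
  have "disc \<rho> Mf a u * (cu * exp (p * (Iz - \<theta>\<^sup>2 / 2 * (u - a))) * Hv) \<le> 1 * (cu * exp (- p * (\<bar>\<rho> - r\<bar> + \<theta>\<^sup>2 / 2) * L) * Hmax)"
    using d cu0 H e1 by (intro mult_mono) (auto intro!: mult_mono)
  then show "disc \<rho> Mf a u * uhat \<alpha> (Zproc \<rho> r \<theta> Mf B a 1 u \<omega>) Hv
         \<le> (1 - \<alpha>) * (1 / \<alpha>) powr (\<alpha> / (\<alpha> - 1)) * exp (- (\<alpha> / (\<alpha> - 1)) * (\<bar>\<rho> - r\<bar> + \<theta>\<^sup>2 / 2) * L) * Hmax
           * exp (- (\<alpha> / (\<alpha> - 1)) * \<theta> * (B u \<omega> - B a \<omega>))"
    unfolding eq cu_def p_def by (intro mult_right_mono) auto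
qed


lemma ceil_iff:
  fixes x t q :: real assumes q: "0 < q"
  shows "(\<lceil>(x - t) * q\<rceil> = int k) \<longleftrightarrow> (x \<le> t + real k / q \<and> \<not> x \<le> t + real k / q - 1 / q)"
proof -
  have a: "((x - t) * q \<le> real k) \<longleftrightarrow> x \<le> t + real k / q" using q by (simp add: field_simps)
  have e: "t + real k / q - 1 / q = t + (real k - 1) / q" by (simp add: diff_divide_distrib)
  have b0: "(real k - 1) / q < x - t \<longleftrightarrow> real k - 1 < (x - t) * q" using q by (simp add: pos_divide_less_eq)
  have b: "(real k - 1 < (x - t) * q) \<longleftrightarrow> \<not> x \<le> t + real k / q - 1 / q" unfolding e using b0 by linarith
  show ?thesis by (simp add: ceiling_eq_iff a b conj_commute)
qed
locale bmx =
  fixes M :: "'a measure" and F :: "real \<Rightarrow> 'a measure" and B :: "real \<Rightarrow> 'a \<Rightarrow> real"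
  assumes uf: "usual_filtration M F" and bmo: "F_brownian_motion M F B"
begin

sublocale prob_space M using uf unfolding usual_filtration_def by auto

lemma F_space: "space (F s) = space M" using uf unfolding usual_filtration_def by auto
lemma F_sets: "sets (F s) \<subseteq> sets M" using uf unfolding usual_filtration_def by auto
lemma F_mono: "s \<le> u \<Longrightarrow> sets (F s) \<subseteq> sets (F u)" using uf unfolding usual_filtration_def by auto
lemma subalg: "subalgebra M (F s)" using F_space F_sets unfolding subalgebra_def by auto
lemma subalgF: "s \<le> u \<Longrightarrow> subalgebra (F u) (F s)" using F_space F_mono unfolding subalgebra_def by auto

lemma B_F: "0 \<le> s \<Longrightarrow> B s \<in> borel_measurable (F s)" using bmo unfolding F_brownian_motion_def by auto
lemma B_meas: "0 \<le> s \<Longrightarrow> B s \<in> borel_measurable M" using measurable_from_subalg[OF subalg B_F] by auto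
lemma B_Fu: "0 \<le> s \<Longrightarrow> s \<le> u \<Longrightarrow> B s \<in> borel_measurable (F u)"
  using measurable_from_subalg[OF subalgF B_F] by auto
lemma B_cont: "\<omega> \<in> space M \<Longrightarrow> continuous_on {0..} (\<lambda>s. B s \<omega>)" using bmo unfolding F_brownian_motion_def by auto
lemma B_dist: "0 \<le> s \<Longrightarrow> s < u \<Longrightarrow> distributed M lborel (\<lambda>\<omega>. B u \<omega> - B s \<omega>) (normal_density 0 (sqrt (u - s)))"
  using bmo unfolding F_brownian_motion_def by auto
lemma B_indep: "0 \<le> s \<Longrightarrow> s < u \<Longrightarrow> indep_set (sets (F s)) (sets (vimage_algebra (space M) (\<lambda>\<omega>. B u \<omega> - B s \<omega>) borel))"
  using bmo unfolding F_brownian_motion_def by auto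

lemma normal_mgf_pt:
  fixes \<sigma> l x :: real assumes "\<sigma> > 0"
  shows "normal_density 0 \<sigma> x * exp (l * x) = exp (l\<^sup>2 * \<sigma>\<^sup>2 / 2) * normal_density (l * \<sigma>\<^sup>2) \<sigma> x"
proof -
  have "- (x - 0)\<^sup>2 / (2 * \<sigma>\<^sup>2) + l * x = l\<^sup>2 * \<sigma>\<^sup>2 / 2 + (- (x - l * \<sigma>\<^sup>2)\<^sup>2 / (2 * \<sigma>\<^sup>2))"
    using assms by (simp add: field_simps power2_eq_square)
  then have "exp (- (x - 0)\<^sup>2 / (2 * \<sigma>\<^sup>2)) * exp (l * x) = exp (l\<^sup>2 * \<sigma>\<^sup>2 / 2) * exp (- (x - l * \<sigma>\<^sup>2)\<^sup>2 / (2 * \<sigma>\<^sup>2))"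
    by (metis exp_add)
  then show ?thesis unfolding normal_density_def by (metis (no_types, lifting) mult.assoc mult.left_commute)
qed

lemma nn_integral_normal: assumes "\<sigma> > 0"
  shows "(\<integral>\<^sup>+x. ennreal (normal_density m \<sigma> x) \<partial>lborel) = 1"
proof -
  interpret P: prob_space "density lborel (\<lambda>x. ennreal (normal_density m \<sigma> x))"
    using prob_space_normal_density[OF assms] .
  have "emeasure (density lborel (\<lambda>x. ennreal (normal_density m \<sigma> x))) UNIV = 1"
    using P.emeasure_space_1 by simp
  then show ?thesis by (simp add: emeasure_density)
qed

lemma mgf:
  assumes "0 \<le> s" "s < u"
  shows "(\<integral>\<^sup>+\<omega>. ennreal (exp (l * (B u \<omega> - B s \<omega>))) \<partial>M) = ennreal (exp (l\<^sup>2 * (u - s) / 2))"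
proof -
  define \<sigma> where "\<sigma> = sqrt (u - s)"
  have sp: "\<sigma> > 0" using assms unfolding \<sigma>_def by auto
  have s2: "\<sigma>\<^sup>2 = u - s" using assms unfolding \<sigma>_def by auto
  have "(\<integral>\<^sup>+\<omega>. ennreal (exp (l * (B u \<omega> - B s \<omega>))) \<partial>M)
      = (\<integral>\<^sup>+x. ennreal (normal_density 0 \<sigma> x) * ennreal (exp (l * x)) \<partial>lborel)"
    using distributed_nn_integral[OF B_dist[OF assms], of "\<lambda>x. ennreal (exp (l * x))"]
    unfolding \<sigma>_def by simp
  also have "\<dots> = (\<integral>\<^sup>+x. ennreal (exp (l\<^sup>2 * \<sigma>\<^sup>2 / 2)) * ennreal (normal_density (l * \<sigma>\<^sup>2) \<sigma> x) \<partial>lborel)"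
    by (intro nn_integral_cong) (simp add: normal_mgf_pt[OF sp] ennreal_mult'[symmetric] normal_density_nonneg del: ennreal_mult')
  also have "\<dots> = ennreal (exp (l\<^sup>2 * \<sigma>\<^sup>2 / 2)) * (\<integral>\<^sup>+x. ennreal (normal_density (l * \<sigma>\<^sup>2) \<sigma> x) \<partial>lborel)"
    by (rule nn_integral_cmult) simp
  also have "\<dots> = ennreal (exp (l\<^sup>2 * (u - s) / 2))" using nn_integral_normal[OF sp] s2 by simp
  finally show ?thesis .
qed


lemma ceil_approx:
  fixes s :: real
  shows "(\<lambda>n. real_of_int \<lceil>s * 2^n\<rceil> / 2^n) \<longlonglongrightarrow> s"
proof (rule tendsto_sandwich[of "\<lambda>n. s" _ _ "\<lambda>n. s + (1/2)^n"])
  show "\<forall>\<^sub>F n in sequentially. s \<le> real_of_int \<lceil>s * 2 ^ n\<rceil> / 2 ^ n"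
  proof (rule always_eventually, rule allI)
    fix n :: nat
    have "s * 2^n \<le> real_of_int \<lceil>s * 2 ^ n\<rceil>" by linarith
    then show "s \<le> real_of_int \<lceil>s * 2 ^ n\<rceil> / 2 ^ n" by (simp add: field_simps)
  qed
  show "\<forall>\<^sub>F n in sequentially. real_of_int \<lceil>s * 2 ^ n\<rceil> / 2 ^ n \<le> s + (1/2)^n"
  proof (rule always_eventually, rule allI)
    fix n :: nat
    have "real_of_int \<lceil>s * 2 ^ n\<rceil> \<le> s * 2^n + 1" by linarith
    then show "real_of_int \<lceil>s * 2 ^ n\<rceil> / 2 ^ n \<le> s + (1/2)^n" by (simp add: field_simps power_one_over)
  qed
  show "(\<lambda>n. s) \<longlonglongrightarrow> s" by simp
  have "(\<lambda>n. (1/2::real)^n) \<longlonglongrightarrow> 0" by (rule LIMSEQ_realpow_zero) auto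
  then show "(\<lambda>n. s + (1/2)^n) \<longlonglongrightarrow> s" using tendsto_add[of "\<lambda>n. s" s sequentially] by fastforce
qed

lemma B_joint: "(\<lambda>x. B (max 0 (snd x)) (fst x)) \<in> borel_measurable (M \<Otimes>\<^sub>M lborel)"
proof (rule borel_measurable_LIMSEQ_real)
  define g where "g n s = max 0 (real_of_int \<lceil>s * 2^n\<rceil> / 2^n)" for n :: nat and s :: real
  show "(\<lambda>x. B (g n (snd x)) (fst x)) \<in> borel_measurable (M \<Otimes>\<^sub>M lborel)" for n
  proof -
    let ?I = "range (\<lambda>k::int. max 0 (real_of_int k / 2^n))"
    have cI: "countable ?I" by simp
    have gm: "(\<lambda>x. g n (snd x)) \<in> borel_measurable (M \<Otimes>\<^sub>M lborel)"
      unfolding g_def by measurable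
    have "(\<lambda>x. g n (snd x)) \<in> measurable (M \<Otimes>\<^sub>M lborel) (count_space ?I)"
      unfolding measurable_count_space_eq_countable[OF cI]
    proof (intro conjI ballI)
      show "(\<lambda>x. g n (snd x)) \<in> space (M \<Otimes>\<^sub>M lborel) \<rightarrow> ?I" unfolding g_def by auto
      fix a assume "a \<in> ?I"
      show "(\<lambda>x. g n (snd x)) -` {a} \<inter> space (M \<Otimes>\<^sub>M lborel) \<in> sets (M \<Otimes>\<^sub>M lborel)"
        by (rule measurable_sets[OF gm]) simp
    qed
    moreover have "(\<lambda>x. B i (fst x)) \<in> borel_measurable (M \<Otimes>\<^sub>M lborel)" if "i \<in> ?I" for i
    proof -
      have "0 \<le> i" using that by auto
      then show ?thesis using B_meas measurable_fst'' by blast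
    qed
    ultimately show ?thesis by (intro measurable_compose_countable'[OF _ _ cI, where f="\<lambda>i x. B i (fst x)" and g="\<lambda>x. g n (snd x)"])
  qed
  fix x :: "'a \<times> real" assume "x \<in> space (M \<Otimes>\<^sub>M lborel)"
  then have xs: "fst x \<in> space M" by (auto simp: space_pair_measure)
  have gl: "(\<lambda>n. g n (snd x)) \<longlonglongrightarrow> max 0 (snd x)"
    unfolding g_def by (intro tendsto_max tendsto_const ceil_approx)
  show "(\<lambda>n. B (g n (snd x)) (fst x)) \<longlonglongrightarrow> B (max 0 (snd x)) (fst x)"
    by (rule continuous_on_tendsto_compose[OF B_cont[OF xs] gl]) (auto simp: g_def)
qed

lemma B_comp_meas:
  assumes "\<tau> \<in> borel_measurable M" "\<And>\<omega>. \<omega> \<in> space M \<Longrightarrow> 0 \<le> \<tau> \<omega>"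
  shows "(\<lambda>\<omega>. B (\<tau> \<omega>) \<omega>) \<in> borel_measurable M"
proof -
  have "(\<lambda>\<omega>. (\<omega>, \<tau> \<omega>)) \<in> measurable M (M \<Otimes>\<^sub>M lborel)"
    using assms(1) by (intro measurable_Pair) (auto simp: measurable_lborel1)
  from measurable_compose[OF this B_joint]
  have "(\<lambda>\<omega>. B (max 0 (\<tau> \<omega>)) \<omega>) \<in> borel_measurable M" by simp
  then show ?thesis by (rule measurable_cong[THEN iffD1, rotated]) (use assms(2) in auto)
qed


lemma path_cont_Icc: assumes "0 \<le> a" "\<omega> \<in> space M"
  shows "continuous_on {a..b} (\<lambda>s. B (max 0 s) \<omega>)"
proof -
  have "continuous_on {a..b} (\<lambda>s. B s \<omega>)" by (rule continuous_on_subset[OF B_cont[OF assms(2)]]) (use assms in auto)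
  then show ?thesis by (rule continuous_on_cong[THEN iffD1, rotated 2]) (use assms in auto)
qed

lemma hint_eq:
  assumes "0 \<le> a" "continuous_on {a..b} k" "\<omega> \<in> space M"
  shows "integral {a..b} (\<lambda>s. k s * exp (l * (B s \<omega> - B a \<omega>)))
       = (\<integral>s. indicator {a..b} s *\<^sub>R (k s * exp (l * (B (max 0 s) \<omega> - B a \<omega>))) \<partial>lborel)"
    and "integrable lborel (\<lambda>s. indicator {a..b} s *\<^sub>R (k s * exp (l * (B (max 0 s) \<omega> - B a \<omega>))))"
proof -
  let ?f = "\<lambda>s. k s * exp (l * (B (max 0 s) \<omega> - B a \<omega>))"
  have c: "continuous_on {a..b} ?f"
    by (intro continuous_intros assms path_cont_Icc)
  show i: "integrable lborel (\<lambda>s. indicator {a..b} s *\<^sub>R ?f s)"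
    by (rule borel_integrable_compact[OF compact_Icc c])
  have "integral {a..b} (\<lambda>s. k s * exp (l * (B s \<omega> - B a \<omega>))) = integral {a..b} ?f"
    by (rule integral_cong) (use assms in auto)
  also have "\<dots> = (LINT s : {a..b} | lborel. ?f s)"
    using set_borel_integral_eq_integral(2)[of "{a..b}" ?f] i unfolding set_integrable_def by simp
  finally show "integral {a..b} (\<lambda>s. k s * exp (l * (B s \<omega> - B a \<omega>))) = (\<integral>s. indicator {a..b} s *\<^sub>R ?f s \<partial>lborel)"
    unfolding set_lebesgue_integral_def .
qed

lemma hint_meas:
  assumes "0 \<le> a" "continuous_on {a..b} k"
  shows "(\<lambda>\<omega>. integral {a..b} (\<lambda>s. k s * exp (l * (B s \<omega> - B a \<omega>)))) \<in> borel_measurable M"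
proof -
  have m1: "(\<lambda>s. indicator {a..b} s *\<^sub>R k s) \<in> borel_measurable borel"
    by (rule borel_measurable_continuous_on_indicator[OF _ assms(2)]) simp
  have m2: "(\<lambda>x::'a\<times>real. indicator {a..b} (snd x) *\<^sub>R k (snd x)) \<in> borel_measurable (M \<Otimes>\<^sub>M lborel)"
    by (rule measurable_compose[OF measurable_snd]) (use m1 in \<open>simp add: measurable_lborel1\<close>)
  have m3: "(\<lambda>x::'a\<times>real. B a (fst x)) \<in> borel_measurable (M \<Otimes>\<^sub>M lborel)"
    using B_meas[OF assms(1)] measurable_fst'' by blast
  have "(\<lambda>x::'a\<times>real. (indicator {a..b} (snd x) *\<^sub>R k (snd x)) * exp (l * (B (max 0 (snd x)) (fst x) - B a (fst x)))) \<in> borel_measurable (M \<Otimes>\<^sub>M lborel)"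
    using m2 m3 B_joint by measurable
  then have "(\<lambda>(\<omega>, s). indicator {a..b} s *\<^sub>R (k s * exp (l * (B (max 0 s) \<omega> - B a \<omega>)))) \<in> borel_measurable (M \<Otimes>\<^sub>M lborel)"
    by (rule measurable_cong[THEN iffD1, rotated]) (auto simp: indicator_def)
  from sigma_finite_measure.borel_measurable_lebesgue_integral[OF sigma_finite_lborel this]
  have "(\<lambda>\<omega>. \<integral>s. indicator {a..b} s *\<^sub>R (k s * exp (l * (B (max 0 s) \<omega> - B a \<omega>))) \<partial>lborel) \<in> borel_measurable M" .
  then show ?thesis by (rule measurable_cong[THEN iffD1, rotated]) (use hint_eq(1)[OF assms] in auto)
qed


lemma hint_nn:
  assumes "0 \<le> a" "a \<le> b"
  shows "(\<integral>\<^sup>+\<omega>. ennreal (integral {a..b} (\<lambda>s. exp (l * (B s \<omega> - B a \<omega>)))) \<partial>M) \<le> ennreal ((b - a) * exp (l\<^sup>2 * (b - a) / 2))"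
proof -
  define G where "G = (\<lambda>\<omega> s. ennreal (indicator {a..b} s * exp (l * (B (max 0 s) \<omega> - B a \<omega>))))"
  have k: "continuous_on {a..b} (\<lambda>s. 1::real)" by simp
  have pt: "ennreal (integral {a..b} (\<lambda>s. exp (l * (B s \<omega> - B a \<omega>)))) = (\<integral>\<^sup>+s. G \<omega> s \<partial>lborel)"
    if "\<omega> \<in> space M" for \<omega>
  proof -
    have "integral {a..b} (\<lambda>s. exp (l * (B s \<omega> - B a \<omega>))) = integral {a..b} (\<lambda>s. 1 * exp (l * (B s \<omega> - B a \<omega>)))" by simp
    also have "\<dots> = (\<integral>s. indicator {a..b} s *\<^sub>R (1 * exp (l * (B (max 0 s) \<omega> - B a \<omega>))) \<partial>lborel)"
      by (rule hint_eq(1)[OF assms(1) k that])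
    finally have e: "integral {a..b} (\<lambda>s. exp (l * (B s \<omega> - B a \<omega>))) = (\<integral>s. indicator {a..b} s *\<^sub>R (1 * exp (l * (B (max 0 s) \<omega> - B a \<omega>))) \<partial>lborel)" .
    have "(\<integral>\<^sup>+s. ennreal (indicator {a..b} s *\<^sub>R (1 * exp (l * (B (max 0 s) \<omega> - B a \<omega>)))) \<partial>lborel)
       = ennreal (\<integral>s. indicator {a..b} s *\<^sub>R (1 * exp (l * (B (max 0 s) \<omega> - B a \<omega>))) \<partial>lborel)"
      by (rule nn_integral_eq_integral[OF hint_eq(2)[OF assms(1) k that]]) (auto simp: indicator_def)
    then show ?thesis unfolding e G_def by simp
  qed
  have Gm: "(\<lambda>(\<omega>, s). G \<omega> s) \<in> borel_measurable (M \<Otimes>\<^sub>M lborel)"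
  proof -
    have m3: "(\<lambda>x::'a\<times>real. B a (fst x)) \<in> borel_measurable (M \<Otimes>\<^sub>M lborel)"
      using B_meas[OF assms(1)] measurable_fst'' by blast
    have "(\<lambda>x::'a\<times>real. ennreal (indicator {a..b} (snd x) * exp (l * (B (max 0 (snd x)) (fst x) - B a (fst x))))) \<in> borel_measurable (M \<Otimes>\<^sub>M lborel)"
      using m3 B_joint by measurable
    then show ?thesis unfolding G_def by (simp add: case_prod_beta')
  qed
  have "(\<integral>\<^sup>+\<omega>. ennreal (integral {a..b} (\<lambda>s. exp (l * (B s \<omega> - B a \<omega>)))) \<partial>M) = (\<integral>\<^sup>+\<omega>. (\<integral>\<^sup>+s. G \<omega> s \<partial>lborel) \<partial>M)"
    by (rule nn_integral_cong) (use pt in auto)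
  also have "\<dots> = (\<integral>\<^sup>+s. (\<integral>\<^sup>+\<omega>. G \<omega> s \<partial>M) \<partial>lborel)"
    using pair_sigma_finite.Fubini'[of M lborel G] Gm
    by (simp add: pair_sigma_finite_def prob_space_axioms prob_space_imp_sigma_finite sigma_finite_lborel)
  also have "\<dots> \<le> (\<integral>\<^sup>+s. ennreal (exp (l\<^sup>2 * (b - a) / 2)) * indicator {a..b} s \<partial>lborel)"
  proof (rule nn_integral_mono)
    fix s :: real
    show "(\<integral>\<^sup>+\<omega>. G \<omega> s \<partial>M) \<le> ennreal (exp (l\<^sup>2 * (b - a) / 2)) * indicator {a..b} s"
    proof (cases "s \<in> {a..b}")
      case False then show ?thesis by (simp add: G_def)
    next
      case True
      have s0: "max 0 s = s" using True assms by auto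
      have "(\<integral>\<^sup>+\<omega>. G \<omega> s \<partial>M) = (\<integral>\<^sup>+\<omega>. ennreal (exp (l * (B s \<omega> - B a \<omega>))) \<partial>M)"
        using True by (simp add: G_def s0)
      also have "\<dots> \<le> ennreal (exp (l\<^sup>2 * (b - a) / 2))"
      proof (cases "s = a")
        case True
        then show ?thesis using assms by (simp add: emeasure_space_1)
      next
        case False
        then have "a < s" using \<open>s \<in> {a..b}\<close> by auto
        then have "(\<integral>\<^sup>+\<omega>. ennreal (exp (l * (B s \<omega> - B a \<omega>))) \<partial>M) = ennreal (exp (l\<^sup>2 * (s - a) / 2))"
          by (rule mgf[OF assms(1)])
        also have "\<dots> \<le> ennreal (exp (l\<^sup>2 * (b - a) / 2))"
          using \<open>s \<in> {a..b}\<close> by (intro ennreal_leI) (auto intro!: mult_left_mono divide_right_mono)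
        finally show ?thesis .
      qed
      finally show ?thesis using True by simp
    qed
  qed
  also have "\<dots> = ennreal (exp (l\<^sup>2 * (b - a) / 2)) * ennreal (b - a)"
    using assms by (simp add: nn_integral_cmult_indicator)
  also have "\<dots> = ennreal ((b - a) * exp (l\<^sup>2 * (b - a) / 2))"
    using assms by (simp add: ennreal_mult'[symmetric] mult.commute)
  finally show ?thesis .
qed

lemma hint_integrable:
  assumes "0 \<le> a" "a \<le> b"
  shows "integrable M (\<lambda>\<omega>. integral {a..b} (\<lambda>s. exp (l * (B s \<omega> - B a \<omega>))))"
    and "(\<integral>\<omega>. integral {a..b} (\<lambda>s. exp (l * (B s \<omega> - B a \<omega>))) \<partial>M) \<le> (b - a) * exp (l\<^sup>2 * (b - a) / 2)"
proof -
  have k: "continuous_on {a..b} (\<lambda>s. 1::real)" by simp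
  have m: "(\<lambda>\<omega>. integral {a..b} (\<lambda>s. exp (l * (B s \<omega> - B a \<omega>)))) \<in> borel_measurable M"
    using hint_meas[OF assms(1) k, of l] by simp
  have nn: "0 \<le> integral {a..b} (\<lambda>s. exp (l * (B s \<omega> - B a \<omega>)))" for \<omega>
    by (cases "(\<lambda>s. exp (l * (B s \<omega> - B a \<omega>))) integrable_on {a..b}") (auto intro: integral_nonneg simp: not_integrable_integral)
  show i: "integrable M (\<lambda>\<omega>. integral {a..b} (\<lambda>s. exp (l * (B s \<omega> - B a \<omega>))))"
    by (rule integrableI_bounded[OF m]) (use hint_nn[OF assms, of l] nn in \<open>auto simp: order_le_less_trans\<close>)
  have "ennreal (\<integral>\<omega>. integral {a..b} (\<lambda>s. exp (l * (B s \<omega> - B a \<omega>))) \<partial>M) \<le> ennreal ((b - a) * exp (l\<^sup>2 * (b - a) / 2))"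
    using hint_nn[OF assms, of l] by (subst nn_integral_eq_integral[OF i, symmetric]) (auto simp: nn)
  then show "(\<integral>\<omega>. integral {a..b} (\<lambda>s. exp (l * (B s \<omega> - B a \<omega>))) \<partial>M) \<le> (b - a) * exp (l\<^sup>2 * (b - a) / 2)"
    using assms by (subst (asm) ennreal_le_iff) auto
qed


lemma indep_prod_nn:
  assumes su: "0 \<le> s" "s < u" and U: "U \<in> borel_measurable (F s)" "\<And>\<omega>. 0 \<le> U \<omega>"
    and phi: "\<phi> \<in> borel_measurable borel" "\<And>x. 0 \<le> \<phi> x"
  shows "(\<integral>\<^sup>+\<omega>. ennreal (U \<omega> * \<phi> (B u \<omega> - B s \<omega>)) \<partial>M)
       = (\<integral>\<^sup>+\<omega>. ennreal (U \<omega>) \<partial>M) * (\<integral>\<^sup>+\<omega>. ennreal (\<phi> (B u \<omega> - B s \<omega>)) \<partial>M)"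
proof -
  define W where "W = (\<lambda>\<omega>. \<phi> (B u \<omega> - B s \<omega>))"
  define V where "V = vimage_algebra (space M) (\<lambda>\<omega>. B u \<omega> - B s \<omega>) borel"
  have Um: "U \<in> borel_measurable M" using measurable_from_subalg[OF subalg U(1)] .
  have Wv: "W \<in> borel_measurable V" unfolding W_def V_def
    by (rule measurable_compose[OF measurable_vimage_algebra1 phi(1)]) simp
  have Wm: "W \<in> borel_measurable M"
  proof -
    have "B u \<in> borel_measurable M" "B s \<in> borel_measurable M" using B_meas su by auto
    then show ?thesis using phi(1) unfolding W_def by measurable
  qed
  have sub1: "sigma_sets (space M) {U -` A \<inter> space M |A. A \<in> sets borel} \<subseteq> sets (F s)"
    using sets.sigma_sets_subset[of "{U -` A \<inter> space M |A. A \<in> sets borel}" "F s"] F_space[of s]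
      measurable_sets[OF U(1)] by auto
  have sub2: "sigma_sets (space M) {W -` A \<inter> space M |A. A \<in> sets borel} \<subseteq> sets V"
    using sets.sigma_sets_subset[of "{W -` A \<inter> space M |A. A \<in> sets borel}" V]
      measurable_sets[OF Wv] by (auto simp: V_def space_vimage_algebra)
  have "indep_set (sigma_sets (space M) {U -` A \<inter> space M |A. A \<in> sets borel}) (sigma_sets (space M) {W -` A \<inter> space M |A. A \<in> sets borel})"
    unfolding indep_set_def
    by (rule indep_sets_mono_sets[OF B_indep[OF su, unfolded indep_set_def]]) (use sub1 sub2 in \<open>auto split: bool.split simp: V_def\<close>)
  then have "indep_var borel U borel W" using Um Wm by (subst indep_var_eq) auto
  from indep_var_compose[OF this, of ennreal borel ennreal borel]
  have "indep_var borel (\<lambda>\<omega>. ennreal (U \<omega>)) borel (\<lambda>\<omega>. ennreal (W \<omega>))" by (simp add: comp_def)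
  then have iv: "indep_vars (\<lambda>_. borel) (case_bool (\<lambda>\<omega>. ennreal (U \<omega>)) (\<lambda>\<omega>. ennreal (W \<omega>))) UNIV"
    unfolding indep_var_def by (rule indep_vars_cong[THEN iffD1, rotated 3]) (auto split: bool.split)
  have "(\<integral>\<^sup>+\<omega>. (\<Prod>i\<in>UNIV. case_bool (\<lambda>\<omega>. ennreal (U \<omega>)) (\<lambda>\<omega>. ennreal (W \<omega>)) i \<omega>) \<partial>M) = (\<Prod>i\<in>UNIV. \<integral>\<^sup>+\<omega>. case_bool (\<lambda>\<omega>. ennreal (U \<omega>)) (\<lambda>\<omega>. ennreal (W \<omega>)) i \<omega> \<partial>M)"
    by (rule indep_vars_nn_integral[OF _ iv]) auto
  then show ?thesis using U(2) phi(2) by (simp add: UNIV_bool W_def mult.commute ennreal_mult)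
qed


lemma stop_meas: assumes "stopping_time F \<tau>" shows "\<tau> \<in> borel_measurable M"
  unfolding borel_measurable_iff_le
proof
  fix a
  have "{x \<in> space (F a). \<tau> x \<le> a} \<in> sets (F a)"
    using assms unfolding stopping_time_def by (intro predE) auto
  then show "{w \<in> space M. \<tau> w \<le> a} \<in> sets M" using F_space F_sets by auto
qed

lemma stop_set: assumes "stopping_time F \<tau>" shows "{x \<in> space M. \<tau> x \<le> a} \<in> sets (F a)"
proof -
  have "{x \<in> space (F a). \<tau> x \<le> a} \<in> sets (F a)"
    using assms unfolding stopping_time_def by (intro predE) auto
  then show ?thesis using F_space by auto
qed

lemma stop_bound:
  assumes st: "stopping_time F \<tau>" and t0: "0 \<le> t" and bnd: "\<And>\<omega>. \<omega> \<in> space M \<Longrightarrow> t \<le> \<tau> \<omega> \<and> \<tau> \<omega> \<le> T"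
  shows "(\<integral>\<^sup>+\<omega>. ennreal (exp (l * (B (\<tau> \<omega>) \<omega> - B t \<omega>))) \<partial>M) \<le> ennreal (exp (l\<^sup>2 * (T + 2 - t) / 2))"
proof -
  define C where "C = ennreal (exp (l\<^sup>2 * (T + 2 - t) / 2))"
  define tn where "tn n \<omega> = t + real_of_int \<lceil>(\<tau> \<omega> - t) * 2^n\<rceil> / 2^n" for n :: nat and \<omega>
  have \<tau>m: "\<tau> \<in> borel_measurable M" by (rule stop_meas[OF st])
  have tnm: "tn n \<in> borel_measurable M" for n unfolding tn_def using \<tau>m by measurable
  have tn_ge: "\<tau> \<omega> \<le> tn n \<omega>" for n \<omega>
  proof -
    have "(\<tau> \<omega> - t) * 2^n \<le> real_of_int \<lceil>(\<tau> \<omega> - t) * 2^n\<rceil>" by linarith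
    then have "\<tau> \<omega> - t \<le> real_of_int \<lceil>(\<tau> \<omega> - t) * 2^n\<rceil> / 2^n" by (simp add: le_divide_eq)
    then show ?thesis unfolding tn_def by linarith
  qed
  have tn0: "0 \<le> tn n \<omega>" if "\<omega> \<in> space M" for n \<omega> using tn_ge[of \<omega> n] bnd[OF that] t0 by linarith
  have tn_lim: "(\<lambda>n. tn n \<omega>) \<longlonglongrightarrow> \<tau> \<omega>" for \<omega>
    using tendsto_add[OF tendsto_const ceil_approx[of "\<tau> \<omega> - t"], of t] unfolding tn_def by simp
  define V where "V n \<omega> = ennreal (exp (l * (B (tn n \<omega>) \<omega> - B t \<omega>)))" for n \<omega>
  have Vm: "V n \<in> borel_measurable M" for n
  proof -
    have "(\<lambda>\<omega>. B (tn n \<omega>) \<omega>) \<in> borel_measurable M"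
      by (rule B_comp_meas[OF tnm]) (use tn0 in auto)
    then show ?thesis unfolding V_def using B_meas[OF t0] by measurable
  qed
  have lim: "(\<lambda>n. V n \<omega>) \<longlonglongrightarrow> ennreal (exp (l * (B (\<tau> \<omega>) \<omega> - B t \<omega>)))" if "\<omega> \<in> space M" for \<omega>
  proof -
    have "(\<lambda>n. B (tn n \<omega>) \<omega>) \<longlonglongrightarrow> B (\<tau> \<omega>) \<omega>"
      by (rule continuous_on_tendsto_compose[OF B_cont[OF that] tn_lim]) (use tn0 bnd[OF that] t0 that in \<open>auto intro!: always_eventually\<close>)
    then show ?thesis unfolding V_def by (intro tendsto_ennrealI tendsto_intros)
  qed
  have key: "integral\<^sup>N M (V n) \<le> C" for n
  proof -
    define N where "N = nat \<lceil>(T - t) * 2^n\<rceil>"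
    define sk where "sk k = t + real k / 2^n" for k :: nat
    define A where "A k = {\<omega> \<in> space M. \<lceil>(\<tau> \<omega> - t) * 2^n\<rceil> = int k}" for k
    define T' where "T' = T + 2"
    define E where "E k \<omega> = ennreal (exp (l * (B (sk k) \<omega> - B t \<omega>)))" for k \<omega>
    define E' where "E' \<omega> = ennreal (exp (l * (B T' \<omega> - B t \<omega>)))" for \<omega>
    have tT: "t \<le> T"
    proof -
      obtain x where "x \<in> space M" using not_empty by blast
      then show ?thesis using bnd[of x] by linarith
    qed
    have ex: "\<exists>k\<in>{0..N}. \<lceil>(\<tau> \<omega> - t) * 2^n\<rceil> = int k" if "\<omega> \<in> space M" for \<omega>
    proof (intro bexI)
      have "0 \<le> (\<tau> \<omega> - t) * 2^n" using bnd[OF that] by simp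
      then have c0: "0 \<le> \<lceil>(\<tau> \<omega> - t) * 2^n\<rceil>" by linarith
      then show "\<lceil>(\<tau> \<omega> - t) * 2^n\<rceil> = int (nat \<lceil>(\<tau> \<omega> - t) * 2^n\<rceil>)" by simp
      have "(\<tau> \<omega> - t) * 2^n \<le> (T - t) * 2^n" using bnd[OF that] by (intro mult_right_mono) auto
      then have "\<lceil>(\<tau> \<omega> - t) * 2^n\<rceil> \<le> \<lceil>(T - t) * 2^n\<rceil>" by (rule ceiling_mono)
      from nat_mono[OF this] show "nat \<lceil>(\<tau> \<omega> - t) * 2^n\<rceil> \<in> {0..N}" unfolding N_def by simp
    qed
    have sk_le: "sk k \<le> T + 1" if "k \<in> {0..N}" for k
    proof -
      have "real k \<le> real N" using that by auto
      also have "\<dots> \<le> (T - t) * 2^n + 1"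
      proof -
        have "0 \<le> (T - t) * 2^n" using tT by simp
        then have "0 \<le> \<lceil>(T - t) * 2^n\<rceil>" by linarith
        then have "real N = real_of_int \<lceil>(T - t) * 2^n\<rceil>" unfolding N_def by simp
        then show ?thesis by linarith
      qed
      finally have "real k / 2^n \<le> ((T - t) * 2^n + 1) / 2^n" by (simp add: divide_right_mono)
      also have "\<dots> = (T - t) + 1 / 2^n" by (simp add: field_simps)
      also have "\<dots> \<le> (T - t) + 1" by simp
      finally show ?thesis unfolding sk_def by simp
    qed
    have sk0: "t \<le> sk k" for k unfolding sk_def by simp
    have AF: "A k \<in> sets (F (sk k))" for k
    proof -
      have eq: "A k = {x \<in> space M. \<tau> x \<le> sk k} \<inter> (space M - {x \<in> space M. \<tau> x \<le> sk k - 1/2^n})"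
      proof -
        have "(\<lceil>(\<tau> x - t) * 2^n\<rceil> = int k) \<longleftrightarrow> (\<tau> x \<le> sk k \<and> \<not> \<tau> x \<le> sk k - 1/2^n)" for x
          unfolding sk_def by (rule ceil_iff) simp
        then show ?thesis unfolding A_def by auto
      qed
      have s1: "{x \<in> space M. \<tau> x \<le> sk k} \<in> sets (F (sk k))" by (rule stop_set[OF st])
      have "{x \<in> space M. \<tau> x \<le> sk k - 1/2^n} \<in> sets (F (sk k - 1/2^n))" by (rule stop_set[OF st])
      then have s2: "{x \<in> space M. \<tau> x \<le> sk k - 1/2^n} \<in> sets (F (sk k))" using F_mono[of "sk k - 1/2^n" "sk k"] by auto
      have s3: "space M - {x \<in> space M. \<tau> x \<le> sk k - 1/2^n} \<in> sets (F (sk k))"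
        using sets.compl_sets[OF s2] F_space by simp
      show ?thesis unfolding eq using s1 s3 by auto
    qed
    have AM: "A k \<in> sets M" for k using AF F_sets by auto
    have Em: "E k \<in> borel_measurable M" for k
    proof -
      have "B (sk k) \<in> borel_measurable M" using B_meas sk0[of k] t0 by simp
      then show ?thesis unfolding E_def using B_meas[OF t0] by measurable
    qed
    have E'm: "E' \<in> borel_measurable M"
    proof -
      have "B T' \<in> borel_measurable M" using B_meas t0 tT unfolding T'_def by simp
      then show ?thesis unfolding E'_def using B_meas[OF t0] by measurable
    qed
    have Vsum: "V n \<omega> = (\<Sum>k\<in>{0..N}. indicator (A k) \<omega> * E k \<omega>)" if om: "\<omega> \<in> space M" for \<omega>
    proof -
      obtain k0 where k0: "k0 \<in> {0..N}" "\<lceil>(\<tau> \<omega> - t) * 2^n\<rceil> = int k0" using ex[OF om] by blast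
      have "(\<Sum>k\<in>{0..N}. indicator (A k) \<omega> * E k \<omega>) = (\<Sum>k\<in>{0..N}. if k = k0 then E k \<omega> else 0)"
        by (rule sum.cong) (auto simp: A_def indicator_def om k0)
      also have "\<dots> = E k0 \<omega>" using k0(1) by simp
      also have "\<dots> = V n \<omega>" unfolding E_def V_def tn_def sk_def using k0(2) by simp
      finally show ?thesis by simp
    qed
    have Isum: "(\<Sum>k\<in>{0..N}. indicator (A k) \<omega> * E' \<omega>) = E' \<omega>" if om: "\<omega> \<in> space M" for \<omega>
    proof -
      obtain k0 where k0: "k0 \<in> {0..N}" "\<lceil>(\<tau> \<omega> - t) * 2^n\<rceil> = int k0" using ex[OF om] by blast
      have "(\<Sum>k\<in>{0..N}. indicator (A k) \<omega> * E' \<omega>) = (\<Sum>k\<in>{0..N}. if k = k0 then E' \<omega> else 0)"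
        by (rule sum.cong) (auto simp: A_def indicator_def om k0)
      also have "\<dots> = E' \<omega>" using k0(1) by simp
      finally show ?thesis .
    qed
    have termb: "(\<integral>\<^sup>+\<omega>. indicator (A k) \<omega> * E k \<omega> \<partial>M) \<le> (\<integral>\<^sup>+\<omega>. indicator (A k) \<omega> * E' \<omega> \<partial>M)" if "k \<in> {0..N}" for k
    proof -
      define U where "U \<omega> = indicator (A k) \<omega> * exp (l * (B (sk k) \<omega> - B t \<omega>))" for \<omega>
      have skT: "sk k < T'" using sk_le[OF that] unfolding T'_def by simp
      have sk00: "0 \<le> sk k" using sk0[of k] t0 by simp
      have Uf: "U \<in> borel_measurable (F (sk k))"
      proof -
        have "B (sk k) \<in> borel_measurable (F (sk k))" "B t \<in> borel_measurable (F (sk k))"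
          using B_F[OF sk00] B_Fu[OF t0 sk0] by auto
        moreover have "indicator (A k) \<in> borel_measurable (F (sk k))" using AF by simp
        ultimately show ?thesis unfolding U_def by measurable
      qed
      have U0: "0 \<le> U \<omega>" for \<omega> unfolding U_def by simp
      have "(\<integral>\<^sup>+\<omega>. indicator (A k) \<omega> * E k \<omega> \<partial>M) = (\<integral>\<^sup>+\<omega>. ennreal (U \<omega>) \<partial>M)"
        unfolding U_def E_def by (intro nn_integral_cong) (simp add: indicator_def)
      also have "\<dots> \<le> (\<integral>\<^sup>+\<omega>. ennreal (U \<omega>) \<partial>M) * (\<integral>\<^sup>+\<omega>. ennreal (exp (l * (B T' \<omega> - B (sk k) \<omega>))) \<partial>M)"
      proof -
        have "(\<integral>\<^sup>+\<omega>. ennreal (exp (l * (B T' \<omega> - B (sk k) \<omega>))) \<partial>M) = ennreal (exp (l\<^sup>2 * (T' - sk k) / 2))"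
          by (rule mgf[OF sk00 skT])
        moreover have "1 \<le> exp (l\<^sup>2 * (T' - sk k) / 2)" using skT by simp
        ultimately have "1 \<le> (\<integral>\<^sup>+\<omega>. ennreal (exp (l * (B T' \<omega> - B (sk k) \<omega>))) \<partial>M)" by simp
        then show ?thesis by (metis mult.right_neutral mult_left_mono zero_le)
      qed
      also have "\<dots> = (\<integral>\<^sup>+\<omega>. ennreal (U \<omega> * exp (l * (B T' \<omega> - B (sk k) \<omega>))) \<partial>M)"
        by (rule indep_prod_nn[OF sk00 skT Uf U0, of "\<lambda>x. exp (l * x)", symmetric]) auto
      also have "\<dots> = (\<integral>\<^sup>+\<omega>. indicator (A k) \<omega> * E' \<omega> \<partial>M)"
      proof (rule nn_integral_cong)
        fix \<omega>
        have "exp (l * (B (sk k) \<omega> - B t \<omega>)) * exp (l * (B T' \<omega> - B (sk k) \<omega>)) = exp (l * (B T' \<omega> - B t \<omega>))"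
          by (simp add: exp_add[symmetric] algebra_simps)
        then show "ennreal (U \<omega> * exp (l * (B T' \<omega> - B (sk k) \<omega>))) = indicator (A k) \<omega> * E' \<omega>"
          unfolding U_def E'_def by (simp add: indicator_def)
      qed
      finally show ?thesis .
    qed
    have "integral\<^sup>N M (V n) = (\<integral>\<^sup>+\<omega>. (\<Sum>k\<in>{0..N}. indicator (A k) \<omega> * E k \<omega>) \<partial>M)"
      by (rule nn_integral_cong) (use Vsum in auto)
    also have "\<dots> = (\<Sum>k\<in>{0..N}. \<integral>\<^sup>+\<omega>. indicator (A k) \<omega> * E k \<omega> \<partial>M)"
      by (rule nn_integral_sum) (use AM Em in auto)
    also have "\<dots> \<le> (\<Sum>k\<in>{0..N}. \<integral>\<^sup>+\<omega>. indicator (A k) \<omega> * E' \<omega> \<partial>M)"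
      by (rule sum_mono) (rule termb)
    also have "\<dots> = (\<integral>\<^sup>+\<omega>. (\<Sum>k\<in>{0..N}. indicator (A k) \<omega> * E' \<omega>) \<partial>M)"
      by (rule nn_integral_sum[symmetric]) (use AM E'm in auto)
    also have "\<dots> = (\<integral>\<^sup>+\<omega>. E' \<omega> \<partial>M)"
      by (rule nn_integral_cong) (use Isum in auto)
    also have "\<dots> = C" unfolding E'_def C_def T'_def using mgf[OF t0, of "T + 2" l] tT by simp
    finally show ?thesis .
  qed
  have "(\<integral>\<^sup>+\<omega>. ennreal (exp (l * (B (\<tau> \<omega>) \<omega> - B t \<omega>))) \<partial>M) = (\<integral>\<^sup>+\<omega>. liminf (\<lambda>n. V n \<omega>) \<partial>M)"
    by (rule nn_integral_cong, rule lim_imp_Liminf[symmetric]) (auto intro: lim)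
  also have "\<dots> \<le> liminf (\<lambda>n. integral\<^sup>N M (V n))" by (rule nn_integral_liminf[OF Vm])
  also have "\<dots> \<le> limsup (\<lambda>n. integral\<^sup>N M (V n))" by (rule Liminf_le_Limsup) simp
  also have "\<dots> \<le> C" by (rule Limsup_bounded) (use key in auto)
  finally show ?thesis unfolding C_def .
qed

end

lemma exp_split: "exp (P * (A - Q * D)) = exp (P * A) * exp (- P * Q * (D::real))"
proof -
  have "P * (A - Q * D) = P * A + (- P * Q * D)" by (simp add: algebra_simps)
  then show ?thesis by (metis exp_add)
qed

lemma lin_aux: fixes P I a L c D :: real
  shows "P * I \<le> P * (- a * L) \<Longrightarrow> - P * (c * D) \<le> - P * (c * L) \<Longrightarrow> P * (I - c * D) \<le> - P * (a + c) * L"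
  by (simp add: algebra_simps)

lemma gen_scale: assumes "0 < z" "0 < y" "0 < \<alpha>"
  shows "disc \<rho> Mf a u * uhat \<alpha> (Zproc \<rho> r \<theta> Mf B a (z * y) u \<omega>) hv
       = z powr (\<alpha> / (\<alpha> - 1)) * (disc \<rho> Mf a u * uhat \<alpha> (Zproc \<rho> r \<theta> Mf B a y u \<omega>) hv)"
  unfolding Zproc_scale uhat_scale[OF assms(1) Zproc_pos[OF assms(2)] assms(3)] by simp

lemma uhat_nonneg: "0 \<le> hv \<Longrightarrow> \<alpha> < 1 \<Longrightarrow> 0 \<le> uhat \<alpha> z hv"
  unfolding uhat_def by simp

lemma H2_bounds: assumes "s \<le> u" "0 \<le> hh" "0 < \<delta>" "0 \<le> fI"
  shows "0 \<le> H2 \<delta> fI s hh u" "H2 \<delta> fI s hh u \<le> hh + fI / \<delta>"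
proof -
  have e1: "exp (- \<delta> * (u - s)) \<le> 1" using assms by (simp add: mult_nonneg_nonneg)
  have e0: "0 < exp (- \<delta> * (u - s))" by simp
  have a: "0 \<le> fI / \<delta>" using assms by simp
  have "0 \<le> hh * exp (- \<delta> * (u - s))" using assms(2) by simp
  moreover have "0 \<le> fI / \<delta> * (1 - exp (- \<delta> * (u - s)))" using mult_nonneg_nonneg[OF a, of "1 - exp (- \<delta> * (u - s))"] e1 by simp
  ultimately show "0 \<le> H2 \<delta> fI s hh u" unfolding H2_def by linarith
  have "hh * exp (- \<delta> * (u - s)) \<le> hh * 1" using e1 assms(2) by (intro mult_left_mono) auto
  moreover have "fI / \<delta> * (1 - exp (- \<delta> * (u - s))) \<le> fI / \<delta> * 1" using e0 a by (intro mult_left_mono) auto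
  ultimately show "H2 \<delta> fI s hh u \<le> hh + fI / \<delta>" unfolding H2_def by linarith
qed

lemma int_pos:
  fixes f :: "real \<Rightarrow> real"
  assumes ab: "a < b" and c: "continuous_on {a..b} f" and p: "\<And>x. x \<in> {a..b} \<Longrightarrow> 0 < f x"
  shows "0 < integral {a..b} f"
proof -
  obtain x where x: "x \<in> {a..b}" "\<forall>y\<in>{a..b}. f x \<le> f y"
    using continuous_attains_inf[OF compact_Icc _ c] ab by auto
  have "integral {a..b} (\<lambda>y. f x) \<le> integral {a..b} f"
    by (rule integral_le) (use x c in \<open>auto intro: integrable_continuous_interval\<close>)
  moreover have "integral {a..b} (\<lambda>y. f x) = (b - a) * f x" using ab by simp
  moreover have "0 < (b - a) * f x" using ab p[OF x(1)] by simp
  ultimately show ?thesis by linarith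
qed

locale mdl = bmx +
  fixes T r \<mu> \<sigma> \<rho> m0 m1 \<kappa> \<delta> \<alpha> I fI t h :: real
  assumes T0: "T > 0" and r0: "r > 0" and \<sigma>0: "\<sigma> > 0" and \<rho>0: "\<rho> > 0" and m00: "m0 \<ge> 0" and m10: "m1 \<ge> 0"
    and \<kappa>0: "\<kappa> > 0" and \<delta>0: "\<delta> > 0" and \<alpha>0: "0 < \<alpha>" and \<alpha>1: "\<alpha> < 1" and I0: "I > 0" and fI0: "fI > 0"
    and t0: "0 \<le> t" and tT: "t < T" and h0: "h > 0"
begin

abbreviation "th \<equiv> (\<mu> - r) / \<sigma>"
abbreviation "pp \<equiv> \<alpha> / (\<alpha> - 1)"
abbreviation "lam \<equiv> - pp * th"
abbreviation "Mf1 \<equiv> (\<lambda>u. mort m0 m1 \<kappa> (H1 \<delta> t h u))"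
abbreviation "Wf \<equiv> Wfun M B T r \<mu> \<sigma> \<rho> m0 m1 \<kappa> \<delta> \<alpha> fI"

definition "cu = (1 - \<alpha>) * (1 / \<alpha>) powr pp"
definition "Kd = exp (- pp * (\<bar>\<rho> - r\<bar> + th\<^sup>2 / 2) * (T - t))"
definition "Ka = cu * Kd * h"
definition "K2 = cu * Kd * (h + fI / \<delta>)"
definition "Kw = K2 * ((T - t) * exp (lam\<^sup>2 * (T - t) / 2))"
definition "Iy s = integral {t..s} (\<lambda>u. \<rho> - r + Mf1 u)"
definition "kk s = disc \<rho> Mf1 t s * (cu * exp (pp * (Iy s - th\<^sup>2 / 2 * (s - t))) * H1 \<delta> t h s)"

lemma pp_neg: "pp < 0" using \<alpha>0 \<alpha>1 by (simp add: divide_pos_neg)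
lemma cu_pos: "0 < cu" unfolding cu_def using \<alpha>0 \<alpha>1 by simp
lemma Kd_pos: "0 < Kd" unfolding Kd_def by simp
lemma Ka_pos: "0 < Ka" unfolding Ka_def using cu_pos Kd_pos h0 by simp
lemma K2_pos: "0 < K2" unfolding K2_def using cu_pos Kd_pos h0 fI0 \<delta>0 by (simp add: add_pos_pos)
lemma Kw_nonneg: "0 \<le> Kw" unfolding Kw_def using K2_pos tT by simp

lemma H1_pos: "0 < H1 \<delta> t h s" unfolding H1_def using h0 by simp
lemma H1_le: "t \<le> s \<Longrightarrow> H1 \<delta> t h s \<le> h" unfolding H1_def using h0 \<delta>0 by (simp add: mult_le_cancel_left1)
lemma H1_cont: "continuous_on A (H1 \<delta> t h)" unfolding H1_def by (intro continuous_intros)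
lemma Mf1_nonneg: "0 \<le> Mf1 u" by (rule mort_nonneg[OF m00 m10])
lemma Mf1_cont: "continuous_on A Mf1"
  unfolding mort_def H1_def using h0 by (intro continuous_intros) auto

lemma int_cont_gen: fixes g :: "real \<Rightarrow> real" assumes "continuous_on UNIV g"
  shows "continuous_on {t..T} (\<lambda>s. integral {t..s} g)"
  by (rule indefinite_integral_continuous_1) (intro integrable_continuous_real continuous_on_subset[OF assms], auto)

lemma Iy_cont: "continuous_on {t..T} Iy"
  unfolding Iy_def by (rule int_cont_gen) (intro continuous_intros Mf1_cont)

lemma d1_cont: "continuous_on {t..T} (disc \<rho> Mf1 t)"
proof -
  have "continuous_on {t..T} (\<lambda>s. integral {t..s} (\<lambda>u. \<rho> + Mf1 u))"
    by (rule int_cont_gen) (intro continuous_intros Mf1_cont)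
  then show ?thesis unfolding disc_def by (intro continuous_intros)
qed

lemma d1_bounds: "t \<le> s \<Longrightarrow> 0 < disc \<rho> Mf1 t s \<and> disc \<rho> Mf1 t s \<le> 1"
  using disc_bounds[of t s \<rho> Mf1] \<rho>0 Mf1_nonneg by auto

lemma kk_cont: "continuous_on {t..T} kk"
  unfolding kk_def by (intro continuous_intros d1_cont Iy_cont H1_cont)

lemma kk_pos: "t \<le> s \<Longrightarrow> 0 < kk s"
  unfolding kk_def using d1_bounds[of s] cu_pos H1_pos[of s] by simp

lemma integrand_eq:
  "disc \<rho> Mf1 t s * uhat \<alpha> (Zproc \<rho> r th Mf1 B t 1 s \<omega>) (H1 \<delta> t h s) = kk s * exp (lam * (B s \<omega> - B t \<omega>))"
proof -
  have "exp (pp * (Iy s - th\<^sup>2 / 2 * (s - t) - th * (B s \<omega> - B t \<omega>)))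
      = exp (pp * (Iy s - th\<^sup>2 / 2 * (s - t))) * exp (lam * (B s \<omega> - B t \<omega>))"
    by (rule exp_split)
  then show ?thesis
    unfolding Zproc_exp uhat_exp[OF \<alpha>0] kk_def Iy_def[symmetric] cu_def by (simp add: mult_ac)
qed

lemma integrand_le: assumes "t \<le> s" "s \<le> T"
  shows "kk s * exp (lam * (B s \<omega> - B t \<omega>)) \<le> Ka * exp (lam * (B s \<omega> - B t \<omega>))"
proof -
  have "disc \<rho> Mf1 t s * uhat \<alpha> (Zproc \<rho> r th Mf1 B t 1 s \<omega>) (H1 \<delta> t h s)
     \<le> (1 - \<alpha>) * (1 / \<alpha>) powr pp * exp (- pp * (\<bar>\<rho> - r\<bar> + th\<^sup>2 / 2) * (T - t)) * h * exp (- pp * th * (B s \<omega> - B t \<omega>))"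
    by (rule integrand_bound(2)) (use assms Mf1_nonneg H1_pos[of s] H1_le[of s] \<alpha>0 \<alpha>1 \<rho>0 in auto)
  then show ?thesis unfolding integrand_eq Ka_def cu_def Kd_def by (simp add: mult_ac)
qed

lemma Ypow: "Zproc \<rho> r th Mf1 B t 1 s \<omega> powr pp = exp (pp * (Iy s - th\<^sup>2 / 2 * (s - t))) * exp (lam * (B s \<omega> - B t \<omega>))"
proof -
  have "Zproc \<rho> r th Mf1 B t 1 s \<omega> powr pp = exp (pp * (Iy s - th\<^sup>2 / 2 * (s - t) - th * (B s \<omega> - B t \<omega>)))"
    unfolding Zproc_exp Iy_def by (simp add: powr_def)
  also have "\<dots> = exp (pp * (Iy s - th\<^sup>2 / 2 * (s - t))) * exp (lam * (B s \<omega> - B t \<omega>))"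
    by (rule exp_split)
  finally show ?thesis .
qed

lemma Ypow_le: assumes "t \<le> s" "s \<le> T"
  shows "Zproc \<rho> r th Mf1 B t 1 s \<omega> powr pp \<le> Kd * exp (lam * (B s \<omega> - B t \<omega>))"
proof -
  have Iy: "- \<bar>\<rho> - r\<bar> * (T - t) \<le> Iy s" unfolding Iy_def
    by (rule int_lower_gen) (use assms Mf1_nonneg in auto)
  have "pp * (Iy s - th\<^sup>2 / 2 * (s - t)) \<le> - pp * (\<bar>\<rho> - r\<bar> + th\<^sup>2 / 2) * (T - t)"
  proof -
    have "pp * Iy s \<le> pp * (- \<bar>\<rho> - r\<bar> * (T - t))" using mult_left_mono_neg[OF Iy, of pp] pp_neg by simp
    moreover have "- pp * (th\<^sup>2 / 2 * (s - t)) \<le> - pp * (th\<^sup>2 / 2 * (T - t))"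
      using pp_neg assms by (intro mult_left_mono) (auto intro: mult_left_mono)
    ultimately show ?thesis by (rule lin_aux)
  qed
  then have "exp (pp * (Iy s - th\<^sup>2 / 2 * (s - t))) \<le> Kd" unfolding Kd_def by simp
  then show ?thesis unfolding Ypow by (intro mult_right_mono) auto
qed


lemma Wf_scale: assumes "0 < z" "0 < y"
  shows "Wf s (z * y) hh = z powr pp * Wf s y hh"
  unfolding Wfun_def Let_def gen_scale[OF assms \<alpha>0] integral_mult_right integral_mult_right_zero ..

lemma Wf_nonneg: assumes "0 \<le> hh" shows "0 \<le> Wf s y hh"
  unfolding Wfun_def Let_def
proof (rule integral_nonneg_AE, rule AE_I2)
  fix \<omega>
  show "0 \<le> integral {s..T} (\<lambda>sa. disc \<rho> (\<lambda>u. mort m0 m1 \<kappa> (H2 \<delta> fI s hh u)) s sa *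
        uhat \<alpha> (Zproc \<rho> r th (\<lambda>u. mort m0 m1 \<kappa> (H2 \<delta> fI s hh u)) B s y sa \<omega>) (H2 \<delta> fI s hh sa))"
  proof (rule int_nonneg_gen)
    fix u assume "u \<in> {s..T}"
    then have "0 \<le> H2 \<delta> fI s hh u" using H2_bounds(1)[of s u hh \<delta> fI] assms \<delta>0 fI0 by auto
    then show "0 \<le> disc \<rho> (\<lambda>u. mort m0 m1 \<kappa> (H2 \<delta> fI s hh u)) s u *
        uhat \<alpha> (Zproc \<rho> r th (\<lambda>u. mort m0 m1 \<kappa> (H2 \<delta> fI s hh u)) B s y u \<omega>) (H2 \<delta> fI s hh u)"
      using uhat_nonneg[OF _ \<alpha>1] by (simp add: disc_def)
  qed
qed

lemma Wf_bound: assumes s: "t \<le> s" "s \<le> T" and hh: "0 < hh" "hh \<le> h"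
  shows "Wf s 1 hh \<le> Kw"
proof -
  define Mf2 where "Mf2 = (\<lambda>u. mort m0 m1 \<kappa> (H2 \<delta> fI s hh u))"
  define e where "e u \<omega> = disc \<rho> Mf2 s u * uhat \<alpha> (Zproc \<rho> r th Mf2 B s 1 u \<omega>) (H2 \<delta> fI s hh u)" for u \<omega>
  define Psi where "Psi \<omega> = integral {s..T} (\<lambda>u. e u \<omega>)" for \<omega>
  define Gs where "Gs \<omega> = integral {s..T} (\<lambda>u. exp (lam * (B u \<omega> - B s \<omega>)))" for \<omega>
  have s0: "0 \<le> s" using s t0 by simp
  have W: "Wf s 1 hh = integral\<^sup>L M Psi" unfolding Wfun_def Let_def Psi_def e_def Mf2_def ..
  have Mf2: "0 \<le> Mf2 v" for v unfolding Mf2_def by (rule mort_nonneg[OF m00 m10])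
  have ebound: "e u \<omega> \<le> K2 * exp (lam * (B u \<omega> - B s \<omega>))" if "u \<in> {s..T}" for u \<omega>
  proof -
    have Hb: "0 \<le> H2 \<delta> fI s hh u" "H2 \<delta> fI s hh u \<le> h + fI / \<delta>"
      using H2_bounds[of s u hh \<delta> fI] that hh \<delta>0 fI0 by auto
    have "e u \<omega> \<le> (1 - \<alpha>) * (1 / \<alpha>) powr pp * exp (- pp * (\<bar>\<rho> - r\<bar> + th\<^sup>2 / 2) * (T - t)) * (h + fI / \<delta>)
           * exp (- pp * th * (B u \<omega> - B s \<omega>))"
      unfolding e_def by (rule integrand_bound(2)) (use that s Mf2 Hb \<alpha>0 \<alpha>1 \<rho>0 in auto)
    then show ?thesis unfolding K2_def cu_def Kd_def by (simp add: mult_ac)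
  qed
  have e0: "0 \<le> e u \<omega>" if "u \<in> {s..T}" for u \<omega>
  proof -
    have Hb: "0 \<le> H2 \<delta> fI s hh u" using H2_bounds(1)[of s u hh \<delta> fI] that hh \<delta>0 fI0 by auto
    show ?thesis unfolding e_def by (rule integrand_bound(1)) (use that Mf2 Hb \<alpha>0 \<alpha>1 \<rho>0 in auto)
  qed
  have Gs0: "0 \<le> Gs \<omega>" for \<omega> unfolding Gs_def by (rule int_nonneg_gen) simp
  have PsiG: "Psi \<omega> \<le> K2 * Gs \<omega>" if om: "\<omega> \<in> space M" for \<omega>
  proof (cases "(\<lambda>u. e u \<omega>) integrable_on {s..T}")
    case True
    have c: "continuous_on {s..T} (\<lambda>u. K2 * exp (lam * (B u \<omega> - B s \<omega>)))"
      using continuous_on_subset[OF B_cont[OF om], of "{s..T}"] s0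
      by (intro continuous_intros) auto
    have "Psi \<omega> \<le> integral {s..T} (\<lambda>u. K2 * exp (lam * (B u \<omega> - B s \<omega>)))"
      unfolding Psi_def by (rule integral_le[OF True integrable_continuous_interval[OF c]]) (use ebound in auto)
    also have "\<dots> = K2 * Gs \<omega>" unfolding Gs_def by (rule integral_mult_right)
    finally show ?thesis .
  next
    case False
    then show ?thesis unfolding Psi_def using Gs0[of \<omega>] K2_pos by (simp add: not_integrable_integral)
  qed
  show ?thesis
  proof (cases "integrable M Psi")
    case True
    have Gi: "integrable M Gs" unfolding Gs_def by (rule hint_integrable(1)[OF s0 s(2)])
    have GE: "integral\<^sup>L M Gs \<le> (T - s) * exp (lam\<^sup>2 * (T - s) / 2)" unfolding Gs_def by (rule hint_integrable(2)[OF s0 s(2)])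
    have "integral\<^sup>L M Psi \<le> integral\<^sup>L M (\<lambda>\<omega>. K2 * Gs \<omega>)"
      by (rule integral_mono[OF True]) (use Gi PsiG in auto)
    also have "\<dots> = K2 * integral\<^sup>L M Gs" by simp
    also have "\<dots> \<le> K2 * ((T - s) * exp (lam\<^sup>2 * (T - s) / 2))" using GE K2_pos by simp
    also have "\<dots> \<le> Kw"
    proof -
      have "lam\<^sup>2 * (T - s) / 2 \<le> lam\<^sup>2 * (T - t) / 2" using s by (intro divide_right_mono mult_left_mono) auto
      then have "exp (lam\<^sup>2 * (T - s) / 2) \<le> exp (lam\<^sup>2 * (T - t) / 2)" by simp
      then have "(T - s) * exp (lam\<^sup>2 * (T - s) / 2) \<le> (T - t) * exp (lam\<^sup>2 * (T - t) / 2)"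
        using s by (intro mult_mono) auto
      then show ?thesis unfolding Kw_def using K2_pos by (intro mult_left_mono) auto
    qed
    finally show ?thesis using W by simp
  next
    case False
    then show ?thesis using W Kw_nonneg by (simp add: not_integrable_integral_eq)
  qed
qed

definition "Phi \<tau> z \<omega> = integral {t..\<tau> \<omega>} (\<lambda>s. disc \<rho> Mf1 t s * uhat \<alpha> (Zproc \<rho> r th Mf1 B t z s \<omega>) (H1 \<delta> t h s))
      + disc \<rho> Mf1 t (\<tau> \<omega>) * (Wf (\<tau> \<omega>) (Zproc \<rho> r th Mf1 B t z (\<tau> \<omega>) \<omega>) (H1 \<delta> t h (\<tau> \<omega>))
          - Zproc \<rho> r th Mf1 B t z (\<tau> \<omega>) \<omega> * gfun T r I (\<tau> \<omega>))"
definition "Xf \<tau> \<omega> = integral {t..\<tau> \<omega>} (\<lambda>s. kk s * exp (lam * (B s \<omega> - B t \<omega>)))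
      + disc \<rho> Mf1 t (\<tau> \<omega>) * Wf (\<tau> \<omega>) (Zproc \<rho> r th Mf1 B t 1 (\<tau> \<omega>) \<omega>) (H1 \<delta> t h (\<tau> \<omega>))"
definition "Yp \<tau> \<omega> = disc \<rho> Mf1 t (\<tau> \<omega>) * Zproc \<rho> r th Mf1 B t 1 (\<tau> \<omega>) \<omega> * gfun T r I (\<tau> \<omega>)"

lemma Phi_eq: assumes z: "0 < z" shows "Phi \<tau> z \<omega> = z powr pp * Xf \<tau> \<omega> - z * Yp \<tau> \<omega>"
proof -
  have Zz: "Zproc \<rho> r th Mf1 B t z s \<omega> = z * Zproc \<rho> r th Mf1 B t 1 s \<omega>" for s
    using Zproc_scale[of \<rho> r th Mf1 B t z 1 s \<omega>] by simp
  have a: "integral {t..\<tau> \<omega>} (\<lambda>s. disc \<rho> Mf1 t s * uhat \<alpha> (Zproc \<rho> r th Mf1 B t z s \<omega>) (H1 \<delta> t h s))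
      = z powr pp * integral {t..\<tau> \<omega>} (\<lambda>s. kk s * exp (lam * (B s \<omega> - B t \<omega>)))"
  proof -
    have pt: "disc \<rho> Mf1 t s * uhat \<alpha> (Zproc \<rho> r th Mf1 B t z s \<omega>) (H1 \<delta> t h s)
        = z powr pp * (kk s * exp (lam * (B s \<omega> - B t \<omega>)))" for s
      using gen_scale[OF z zero_less_one \<alpha>0, of \<rho> Mf1 t s r th B \<omega> "H1 \<delta> t h s"] integrand_eq[of s \<omega>] by simp
    have "integral {t..\<tau> \<omega>} (\<lambda>s. disc \<rho> Mf1 t s * uhat \<alpha> (Zproc \<rho> r th Mf1 B t z s \<omega>) (H1 \<delta> t h s))
        = integral {t..\<tau> \<omega>} (\<lambda>s. z powr pp * (kk s * exp (lam * (B s \<omega> - B t \<omega>))))"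
      unfolding pt ..
    then show ?thesis by simp
  qed
  have w: "Wf (\<tau> \<omega>) (Zproc \<rho> r th Mf1 B t z (\<tau> \<omega>) \<omega>) (H1 \<delta> t h (\<tau> \<omega>))
      = z powr pp * Wf (\<tau> \<omega>) (Zproc \<rho> r th Mf1 B t 1 (\<tau> \<omega>) \<omega>) (H1 \<delta> t h (\<tau> \<omega>))"
    unfolding Zz by (rule Wf_scale[OF z Zproc_pos]) simp
  show ?thesis by (simp only: Phi_def Xf_def Yp_def a w) (simp add: Zz algebra_simps)
qed


lemma ST_props: assumes "\<tau> \<in> stopping_times_in M F t T"
  shows "stopping_time F \<tau>" "\<And>\<omega>. \<omega> \<in> space M \<Longrightarrow> t \<le> \<tau> \<omega> \<and> \<tau> \<omega> \<le> T"
  using assms unfolding stopping_times_in_def by auto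

lemma comp_cont_meas:
  assumes g: "continuous_on {t..T} g" and \<tau>: "\<tau> \<in> borel_measurable M" and b: "\<And>\<omega>. \<omega> \<in> space M \<Longrightarrow> \<tau> \<omega> \<in> {t..T}"
  shows "(\<lambda>\<omega>. g (\<tau> \<omega>)) \<in> borel_measurable M"
proof -
  define c where "c x = max t (min T x)" for x :: real
  have cc: "continuous_on UNIV c" unfolding c_def by (intro continuous_intros)
  have "continuous_on UNIV (\<lambda>x. g (c x))"
    by (rule continuous_on_compose2[OF g cc]) (use tT in \<open>auto simp: c_def\<close>)
  then have "(\<lambda>x. g (c x)) \<in> borel_measurable borel" by (rule borel_measurable_continuous_onI)
  from measurable_compose[OF \<tau> this] have "(\<lambda>\<omega>. g (c (\<tau> \<omega>))) \<in> borel_measurable M" .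
  then show ?thesis by (rule measurable_cong[THEN iffD1, rotated]) (use b in \<open>auto simp: c_def\<close>)
qed

lemma Yp_meas: assumes "\<tau> \<in> stopping_times_in M F t T" shows "Yp \<tau> \<in> borel_measurable M"
proof -
  note st = ST_props[OF assms]
  have \<tau>m: "\<tau> \<in> borel_measurable M" by (rule stop_meas[OF st(1)])
  have b: "\<tau> \<omega> \<in> {t..T}" if "\<omega> \<in> space M" for \<omega> using st(2)[OF that] by auto
  have m1: "(\<lambda>\<omega>. disc \<rho> Mf1 t (\<tau> \<omega>)) \<in> borel_measurable M" by (rule comp_cont_meas[OF d1_cont \<tau>m b])
  have m2: "(\<lambda>\<omega>. Iy (\<tau> \<omega>)) \<in> borel_measurable M" by (rule comp_cont_meas[OF Iy_cont \<tau>m b])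
  have gc: "continuous_on {t..T} (gfun T r I)" unfolding gfun_def by (intro continuous_intros)
  have m3: "(\<lambda>\<omega>. gfun T r I (\<tau> \<omega>)) \<in> borel_measurable M" by (rule comp_cont_meas[OF gc \<tau>m b])
  have m4: "(\<lambda>\<omega>. B (\<tau> \<omega>) \<omega>) \<in> borel_measurable M"
    by (rule B_comp_meas[OF \<tau>m]) (use b t0 in force)
  have m5: "B t \<in> borel_measurable M" by (rule B_meas[OF t0])
  have "(\<lambda>\<omega>. disc \<rho> Mf1 t (\<tau> \<omega>) * exp (Iy (\<tau> \<omega>) - th\<^sup>2 / 2 * (\<tau> \<omega> - t) - th * (B (\<tau> \<omega>) \<omega> - B t \<omega>)) * gfun T r I (\<tau> \<omega>))
      \<in> borel_measurable M" using m1 m2 m3 m4 m5 \<tau>m by measurable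
  then show ?thesis unfolding Yp_def Zproc_exp Iy_def .
qed

lemma Yp_nonneg: assumes "\<tau> \<in> stopping_times_in M F t T" "\<omega> \<in> space M" shows "0 \<le> Yp \<tau> \<omega>"
proof -
  note b = ST_props(2)[OF assms]
  have "0 \<le> r * (T - \<tau> \<omega>)" using b r0 by simp
  then have "exp (- r * (T - \<tau> \<omega>)) \<le> 1" by simp
  then have g: "0 \<le> gfun T r I (\<tau> \<omega>)" unfolding gfun_def using r0 I0 by (intro mult_nonneg_nonneg) auto
  have d: "0 < disc \<rho> Mf1 t (\<tau> \<omega>)" using d1_bounds b by auto
  have z: "0 < Zproc \<rho> r th Mf1 B t 1 (\<tau> \<omega>) \<omega>" by (rule Zproc_pos) simp
  show ?thesis unfolding Yp_def using g d z by (intro mult_nonneg_nonneg) auto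
qed

lemma Xf_nonneg: assumes "\<tau> \<in> stopping_times_in M F t T" "\<omega> \<in> space M" shows "0 \<le> Xf \<tau> \<omega>"
proof -
  note b = ST_props(2)[OF assms]
  have i: "0 \<le> integral {t..\<tau> \<omega>} (\<lambda>s. kk s * exp (lam * (B s \<omega> - B t \<omega>)))"
  proof (rule int_nonneg_gen)
    fix u assume "u \<in> {t..\<tau> \<omega>}"
    then have "0 < kk u" using kk_pos by simp
    then show "0 \<le> kk u * exp (lam * (B u \<omega> - B t \<omega>))" by simp
  qed
  have d: "0 < disc \<rho> Mf1 t (\<tau> \<omega>)" using d1_bounds b by auto
  have w: "0 \<le> Wf (\<tau> \<omega>) (Zproc \<rho> r th Mf1 B t 1 (\<tau> \<omega>) \<omega>) (H1 \<delta> t h (\<tau> \<omega>))"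
    by (rule Wf_nonneg) (rule less_imp_le[OF H1_pos])
  have "0 \<le> disc \<rho> Mf1 t (\<tau> \<omega>) * Wf (\<tau> \<omega>) (Zproc \<rho> r th Mf1 B t 1 (\<tau> \<omega>) \<omega>) (H1 \<delta> t h (\<tau> \<omega>))"
    using d w by simp
  then show ?thesis unfolding Xf_def using i by simp
qed

definition "Gt \<omega> = integral {t..T} (\<lambda>s. exp (lam * (B s \<omega> - B t \<omega>)))"
definition "Xb \<tau> \<omega> = Ka * Gt \<omega> + Kw * Kd * exp (lam * (B (\<tau> \<omega>) \<omega> - B t \<omega>))"
definition "Cx = Ka * ((T - t) * exp (lam\<^sup>2 * (T - t) / 2)) + Kw * Kd * exp (lam\<^sup>2 * (T + 2 - t) / 2)"

lemma Xf_le: assumes "\<tau> \<in> stopping_times_in M F t T" "\<omega> \<in> space M" shows "Xf \<tau> \<omega> \<le> Xb \<tau> \<omega>"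
proof -
  note b = ST_props(2)[OF assms]
  define f where "f s = kk s * exp (lam * (B s \<omega> - B t \<omega>))" for s
  have c: "continuous_on {t..T} f" unfolding f_def
    using continuous_on_subset[OF B_cont[OF assms(2)], of "{t..T}"] t0
    by (intro continuous_intros kk_cont) auto
  have sub: "{t..\<tau> \<omega>} \<subseteq> {t..T}" using b by auto
  have i1: "f integrable_on {t..\<tau> \<omega>}" by (rule integrable_continuous_interval[OF continuous_on_subset[OF c sub]])
  have i2: "f integrable_on {t..T}" by (rule integrable_continuous_interval[OF c])
  have nn: "\<forall>x\<in>{t..T}. 0 \<le> f x"
  proof
    fix x assume "x \<in> {t..T}"
    then have "0 < kk x" using kk_pos by simp
    then show "0 \<le> f x" unfolding f_def by simp
  qed
  have "integral {t..\<tau> \<omega>} f \<le> integral {t..T} f" by (rule integral_subset_le[OF sub i1 i2 nn])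
  also have "\<dots> \<le> integral {t..T} (\<lambda>s. Ka * exp (lam * (B s \<omega> - B t \<omega>)))"
  proof (rule integral_le[OF i2])
    have "continuous_on {t..T} (\<lambda>s. Ka * exp (lam * (B s \<omega> - B t \<omega>)))"
      using continuous_on_subset[OF B_cont[OF assms(2)], of "{t..T}"] t0 by (intro continuous_intros) auto
    then show "(\<lambda>s. Ka * exp (lam * (B s \<omega> - B t \<omega>))) integrable_on {t..T}" by (rule integrable_continuous_interval)
    fix x assume "x \<in> {t..T}"
    then show "f x \<le> Ka * exp (lam * (B x \<omega> - B t \<omega>))" unfolding f_def by (intro integrand_le) auto
  qed
  also have "\<dots> = Ka * Gt \<omega>" unfolding Gt_def by (rule integral_mult_right)
  finally have a: "integral {t..\<tau> \<omega>} f \<le> Ka * Gt \<omega>" .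
  define Y1 where "Y1 = Zproc \<rho> r th Mf1 B t 1 (\<tau> \<omega>) \<omega>"
  have Y1p: "0 < Y1" unfolding Y1_def by (rule Zproc_pos) simp
  define E where "E = exp (lam * (B (\<tau> \<omega>) \<omega> - B t \<omega>))"
  define W1 where "W1 = Wf (\<tau> \<omega>) 1 (H1 \<delta> t h (\<tau> \<omega>))"
  define d where "d = disc \<rho> Mf1 t (\<tau> \<omega>)"
  have WY: "Wf (\<tau> \<omega>) Y1 (H1 \<delta> t h (\<tau> \<omega>)) = Y1 powr pp * W1"
    using Wf_scale[OF Y1p zero_less_one] unfolding W1_def by simp
  have P: "Y1 powr pp \<le> Kd * E" unfolding Y1_def E_def using b by (intro Ypow_le) auto
  have W1b: "W1 \<le> Kw" unfolding W1_def using b H1_pos H1_le by (intro Wf_bound) auto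
  have W10: "0 \<le> W1" unfolding W1_def using H1_pos by (intro Wf_nonneg less_imp_le)
  have KE: "0 \<le> Kd * E" unfolding E_def using Kd_pos by simp
  have pb: "Y1 powr pp * W1 \<le> (Kd * E) * Kw" by (rule mult_mono[OF P W1b KE W10])
  have d01: "0 < d" "d \<le> 1" unfolding d_def using d1_bounds b by auto
  have p0: "0 \<le> Y1 powr pp * W1" using W10 by simp
  have "d * (Y1 powr pp * W1) \<le> 1 * ((Kd * E) * Kw)"
    by (rule mult_mono[OF d01(2) pb zero_le_one p0])
  then have c: "disc \<rho> Mf1 t (\<tau> \<omega>) * Wf (\<tau> \<omega>) Y1 (H1 \<delta> t h (\<tau> \<omega>)) \<le> Kw * Kd * exp (lam * (B (\<tau> \<omega>) \<omega> - B t \<omega>))"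
    unfolding WY d_def E_def by (simp add: mult_ac)
  show ?thesis using a c unfolding Xf_def Xb_def f_def Y1_def by linarith
qed

lemma Gt_int: "integrable M Gt" "integral\<^sup>L M Gt \<le> (T - t) * exp (lam\<^sup>2 * (T - t) / 2)"
  unfolding Gt_def using hint_integrable[OF t0, of T lam] tT by auto

lemma Etau_int: assumes "\<tau> \<in> stopping_times_in M F t T"
  shows "integrable M (\<lambda>\<omega>. exp (lam * (B (\<tau> \<omega>) \<omega> - B t \<omega>)))"
    and "integral\<^sup>L M (\<lambda>\<omega>. exp (lam * (B (\<tau> \<omega>) \<omega> - B t \<omega>))) \<le> exp (lam\<^sup>2 * (T + 2 - t) / 2)"
proof -
  note st = ST_props[OF assms]
  have \<tau>m: "\<tau> \<in> borel_measurable M" by (rule stop_meas[OF st(1)])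
  have m4: "(\<lambda>\<omega>. B (\<tau> \<omega>) \<omega>) \<in> borel_measurable M"
    by (rule B_comp_meas[OF \<tau>m]) (use st(2) t0 in force)
  have m: "(\<lambda>\<omega>. exp (lam * (B (\<tau> \<omega>) \<omega> - B t \<omega>))) \<in> borel_measurable M"
    using m4 B_meas[OF t0] by measurable
  have nb: "(\<integral>\<^sup>+\<omega>. ennreal (exp (lam * (B (\<tau> \<omega>) \<omega> - B t \<omega>))) \<partial>M) \<le> ennreal (exp (lam\<^sup>2 * (T + 2 - t) / 2))"
    by (rule stop_bound[OF st(1) t0 st(2)])
  show i: "integrable M (\<lambda>\<omega>. exp (lam * (B (\<tau> \<omega>) \<omega> - B t \<omega>)))"
    by (rule integrableI_bounded[OF m]) (use nb in \<open>auto simp: order_le_less_trans\<close>)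
  have "ennreal (integral\<^sup>L M (\<lambda>\<omega>. exp (lam * (B (\<tau> \<omega>) \<omega> - B t \<omega>)))) \<le> ennreal (exp (lam\<^sup>2 * (T + 2 - t) / 2))"
    using nb by (subst nn_integral_eq_integral[OF i, symmetric]) auto
  then show "integral\<^sup>L M (\<lambda>\<omega>. exp (lam * (B (\<tau> \<omega>) \<omega> - B t \<omega>))) \<le> exp (lam\<^sup>2 * (T + 2 - t) / 2)"
    by (subst (asm) ennreal_le_iff) auto
qed

lemma Xb_int: assumes "\<tau> \<in> stopping_times_in M F t T"
  shows "integrable M (Xb \<tau>)" "integral\<^sup>L M (Xb \<tau>) \<le> Cx"
proof -
  have i1: "integrable M (\<lambda>\<omega>. Ka * Gt \<omega>)" using Gt_int(1) by simp
  have i2: "integrable M (\<lambda>\<omega>. Kw * Kd * exp (lam * (B (\<tau> \<omega>) \<omega> - B t \<omega>)))" using Etau_int(1)[OF assms] by simp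
  show "integrable M (Xb \<tau>)" unfolding Xb_def using i1 i2 by simp
  have "integral\<^sup>L M (Xb \<tau>) = Ka * integral\<^sup>L M Gt + Kw * Kd * integral\<^sup>L M (\<lambda>\<omega>. exp (lam * (B (\<tau> \<omega>) \<omega> - B t \<omega>)))"
    unfolding Xb_def using i1 i2 by (simp add: Bochner_Integration.integral_add)
  also have "\<dots> \<le> Cx" unfolding Cx_def
    using Gt_int(2) Etau_int(2)[OF assms] Ka_pos Kw_nonneg Kd_pos
    by (intro add_mono mult_left_mono) auto
  finally show "integral\<^sup>L M (Xb \<tau>) \<le> Cx" .
qed

lemma form_tau: assumes "\<tau> \<in> stopping_times_in M F t T"
  shows "\<exists>A Bc. 0 \<le> A \<and> A \<le> Cx \<and> 0 \<le> Bc \<and> (\<forall>z>0. integral\<^sup>L M (Phi \<tau> z) = z powr pp * A - z * Bc)"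
proof -
  obtain A Bc where AB: "0 \<le> A" "A \<le> integral\<^sup>L M (Xb \<tau>)" "0 \<le> Bc"
    "\<forall>z>0. integral\<^sup>L M (\<lambda>\<omega>. z powr pp * Xf \<tau> \<omega> - z * Yp \<tau> \<omega>) = z powr pp * A - z * Bc"
    using lin_form[of "Xf \<tau>" "Xb \<tau>" "Yp \<tau>" pp] Xf_nonneg[OF assms] Xf_le[OF assms] Xb_int(1)[OF assms]
      Yp_meas[OF assms] Yp_nonneg[OF assms] by blast
  have "\<forall>z>0. integral\<^sup>L M (Phi \<tau> z) = z powr pp * A - z * Bc"
  proof (intro allI impI)
    fix z :: real assume z: "0 < z"
    have "Phi \<tau> z = (\<lambda>\<omega>. z powr pp * Xf \<tau> \<omega> - z * Yp \<tau> \<omega>)" using Phi_eq[OF z] by (intro ext) simp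
    then show "integral\<^sup>L M (Phi \<tau> z) = z powr pp * A - z * Bc" using AB(4) z by simp
  qed
  then show ?thesis using AB(1-3) Xb_int(2)[OF assms] by (intro exI[of _ A] exI[of _ Bc]) auto
qed

lemma const_ST: "(\<lambda>_. T) \<in> stopping_times_in M F t T"
  unfolding stopping_times_in_def stopping_time_def
proof (intro CollectI conjI allI ballI)
  fix s
  show "Measurable.pred (F s) (\<lambda>x. T \<le> s)" by (cases "T \<le> s") (auto simp: pred_def)
qed (use tT in auto)

lemma pos_T: assumes z: "0 < z" shows "0 < integral\<^sup>L M (Phi (\<lambda>_. T) z)"
proof -
  define aT where "aT \<omega> = integral {t..T} (\<lambda>s. kk s * exp (lam * (B s \<omega> - B t \<omega>)))" for \<omega>
  have WT: "Wf T y hh = 0" for y hh unfolding Wfun_def Let_def by simp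
  have gT: "gfun T r I T = 0" unfolding gfun_def by simp
  have P: "Phi (\<lambda>_. T) z = (\<lambda>\<omega>. z powr pp * aT \<omega>)"
    using Phi_eq[OF z] by (intro ext) (simp add: Xf_def Yp_def WT gT aT_def)
  have am: "aT \<in> borel_measurable M" unfolding aT_def by (rule hint_meas[OF t0 kk_cont])
  have apos: "0 < aT \<omega>" if om: "\<omega> \<in> space M" for \<omega>
    unfolding aT_def
  proof (rule int_pos[OF tT])
    show "continuous_on {t..T} (\<lambda>s. kk s * exp (lam * (B s \<omega> - B t \<omega>)))"
      using continuous_on_subset[OF B_cont[OF om], of "{t..T}"] t0 by (intro continuous_intros kk_cont) auto
  qed (use kk_pos in auto)
  have ale: "aT \<omega> \<le> Xb (\<lambda>_. T) \<omega>" if om: "\<omega> \<in> space M" for \<omega>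
    using Xf_le[OF const_ST om] unfolding Xf_def aT_def WT by simp
  have ai: "integrable M aT"
    by (rule Bochner_Integration.integrable_bound[OF Xb_int(1)[OF const_ST] am])
       (rule AE_I2, use apos ale in \<open>force\<close>)
  have "0 < integral\<^sup>L M aT"
  proof -
    have "0 \<le> integral\<^sup>L M aT" by (rule integral_nonneg_AE) (use apos in \<open>auto intro!: AE_I2 less_imp_le\<close>)
    moreover have "integral\<^sup>L M aT \<noteq> 0"
    proof
      assume "integral\<^sup>L M aT = 0"
      moreover have nn: "AE \<omega> in M. 0 \<le> aT \<omega>" using apos by (auto intro!: AE_I2 less_imp_le)
      ultimately have "AE \<omega> in M. aT \<omega> = 0" using integral_nonneg_eq_0_iff_AE[OF ai nn] by simp
      moreover have "AE \<omega> in M. 0 < aT \<omega>" using apos by (auto intro!: AE_I2)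
      ultimately have "AE \<omega> in M. False" by eventually_elim auto
      then show False using prob_space.AE_False[OF prob_space_axioms] by simp
    qed
    ultimately show ?thesis by simp
  qed
  then show ?thesis unfolding P using z by simp
qed

end
theorem proposition5p1:
  fixes M :: "'a measure" and F :: "real \<Rightarrow> 'a measure" and B :: "real \<Rightarrow> 'a \<Rightarrow> real"
    and T r \<mu> \<sigma> \<rho> m0 m1 \<kappa> \<delta> \<alpha> I fI t h :: real
  assumes "usual_filtration M F" and "F_brownian_motion M F B"
    and "T > 0" and "r > 0" and "\<sigma> > 0" and "\<rho> > 0" and "m0 \<ge> 0" and "m1 \<ge> 0"
    and "\<kappa> > 0" and "\<delta> > 0" and "0 < \<alpha>" and "\<alpha> < 1" and "I > 0" and "fI > 0"
    and "0 \<le> t" and "t < T" and "h > 0"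
  shows "strictly_convex_on {0<..} (\<lambda>z. Jfun M F B T r \<mu> \<sigma> \<rho> m0 m1 \<kappa> \<delta> \<alpha> I fI t z h)"
proof -
  interpret mdl M F B T r \<mu> \<sigma> \<rho> m0 m1 \<kappa> \<delta> \<alpha> I fI t h
    by unfold_locales (use assms in auto)
  have J: "(\<lambda>z. Jfun M F B T r \<mu> \<sigma> \<rho> m0 m1 \<kappa> \<delta> \<alpha> I fI t z h)
      = (\<lambda>z. SUP \<tau>\<in>stopping_times_in M F t T. integral\<^sup>L M (Phi \<tau> z))"
    by (simp add: Jfun_def Let_def Phi_def[abs_def])
  show ?thesis unfolding J
  proof (rule sup_strict[where f="\<lambda>\<tau> z. integral\<^sup>L M (Phi \<tau> z)" and C=Cx, OF pp_neg])
    show "stopping_times_in M F t T \<noteq> {}" using const_ST by blast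
    show "\<And>i. i \<in> stopping_times_in M F t T \<Longrightarrow> \<exists>A Bc. 0 \<le> A \<and> A \<le> Cx \<and> 0 \<le> Bc \<and> (\<forall>z>0. integral\<^sup>L M (Phi i z) = z powr pp * A - z * Bc)"
      by (rule form_tau)
    show "\<And>z. 0 < z \<Longrightarrow> \<exists>i\<in>stopping_times_in M F t T. 0 < integral\<^sup>L M (Phi i z)"
      using const_ST pos_T by blast
  qed
qed

end
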